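(* Let $\sigma$ and $\sigma'$ be two distinct translated copies of a regular $k$-gon in $\mathbb{R}^2$, $k\ge 4$, whose interiors have a non-empty intersection. Let $p$ be any point in $\sigma\cap\sigma'$. Let $x$ and $y$ be two points of $\partial\sigma\cap\partial\sigma'$ lying in two different connected components of $\partial\sigma\cap\partial\sigma'$. Then the angle $\angle xpy$ of the triangle $\triangle xpy$ is at least $\frac{\pi}{4}$.
   Context: $\partial\sigma$ denotes the boundary of $\sigma$. A connected component of a set is a maximal connected subset of it. *)

theory Defs
  imports "HOL-Analysis.Analysis"
begin

text \<open>The plane R^2 is modelled as the complex numbers. A regular k-gon is the
convex hull of k points equally spaced on a circle of positive radius r
centred at c, with arbitrary rotation phase th.\<close>

definition regular_polygon :: "nat \<Rightarrow> complex \<Rightarrow> real \<Rightarrow> real \<Rightarrow> complex set" where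
  "regular_polygon k c r th =
     convex hull {c + complex_of_real r * cis (th + 2 * pi * real j / real k) | j. j < k}"

definition is_regular_polygon :: "nat \<Rightarrow> complex set \<Rightarrow> bool" where
  "is_regular_polygon k S \<longleftrightarrow> (\<exists>c r th. r > 0 \<and> S = regular_polygon k c r th)"

definition angle_at :: "complex \<Rightarrow> complex \<Rightarrow> complex \<Rightarrow> real" where
  "angle_at x p y = arccos (inner (x - p) (y - p) / (norm (x - p) * norm (y - p)))"

end

theory Submission
  imports Defs
begin

section \<open>Trigonometric helpers\<close>

lemma sin_2pi_int: "sin (2*pi*(of_int m::real)) = 0"
  by (metis sin_int_2pin)

lemma cos_2pi_int: "cos (2*pi*(of_int m::real)) = 1"
  by (metis cos_int_2pin)

lemma cos_per: "cos (x + 2*pi*(of_int m::real)) = cos x"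
  by (simp add: cos_add sin_2pi_int cos_2pi_int)

lemma cis_per: "cis (x + 2*pi*(of_int m::real)) = cis x"
  by (simp add: complex_eq_iff cos_per sin_add sin_2pi_int cos_2pi_int)

lemma inner_cis_cis: "inner (cis a) (cis b) = cos (b - a)"
  by (simp add: inner_complex_def cos_diff)

lemma cos_odd_le:
  assumes k: "k \<ge> (1::nat)" and qodd: "odd (q::int)"
  shows "cos (of_int q * pi / real k) \<le> cos (pi / real k)"
proof -
  define M where "M = (q + int k) div (2 * int k)"
  define q' where "q' = q - 2 * int k * M"
  have kpos: "int k > 0" using k by simp
  have "q + int k = (2 * int k) * M + (q + int k) mod (2 * int k)"
    unfolding M_def by simp
  moreover have "0 \<le> (q + int k) mod (2 * int k)" "(q + int k) mod (2 * int k) < 2 * int k"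
    using kpos by simp_all
  ultimately have q'b: "- int k \<le> q'" "q' < int k" unfolding q'_def by linarith+
  have "odd q'" unfolding q'_def using qodd by simp
  hence "q' \<noteq> 0" by auto
  hence q'1: "1 \<le> \<bar>q'\<bar>" by linarith
  have eq: "of_int q * pi / real k = of_int q' * pi / real k + 2*pi*(of_int M::real)"
    unfolding q'_def using kpos by (simp add: field_simps)
  have "cos (of_int q * pi / real k) = cos (of_int q' * pi / real k)"
    by (simp only: eq cos_per)
  also have "\<dots> = cos (of_int \<bar>q'\<bar> * pi / real k)"
  proof (cases "q' \<ge> 0")
    case False
    hence "of_int \<bar>q'\<bar> * pi / real k = - (of_int q' * pi / real k)" by simp
    thus ?thesis by (simp only: cos_minus)
  qed simp
  also have "\<dots> \<le> cos (pi / real k)"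
  proof (rule cos_monotone_0_pi_le)
    show "0 \<le> pi / real k" by simp
    show "pi / real k \<le> of_int \<bar>q'\<bar> * pi / real k"
      using q'1 k by (simp add: divide_right_mono)
    have "\<bar>q'\<bar> \<le> int k" using q'b by linarith
    hence "of_int \<bar>q'\<bar> \<le> real k" by linarith
    thus "of_int \<bar>q'\<bar> * pi / real k \<le> pi" using k
      by (simp add: field_simps mult_right_mono)
  qed
  finally show ?thesis .
qed

lemma cos_ge_arc:
  assumes "0 \<le> g" "g \<le> pi" "cos x \<ge> cos g"
  shows "\<exists>M::int. \<bar>x - 2*pi*(of_int M::real)\<bar> \<le> g"
proof -
  define M where "M = \<lfloor>(x + pi) / (2*pi)\<rfloor>"
  define x' where "x' = x - 2*pi*(of_int M::real)"
  have "(of_int M::real) \<le> (x + pi) / (2*pi)" "(x + pi) / (2*pi) < (of_int M::real) + 1"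
    unfolding M_def by linarith+
  hence b: "- pi \<le> x'" "x' < pi" unfolding x'_def by (simp_all add: field_simps)
  have "cos x' = cos x" unfolding x'_def
    using cos_per[of "x - 2*pi*(of_int M::real)" M] by simp
  have "cos \<bar>x'\<bar> = cos x'" by (cases "x' \<ge> 0") simp_all
  hence c: "cos \<bar>x'\<bar> \<ge> cos g" using assms \<open>cos x' = cos x\<close> by simp
  have x0: "0 \<le> \<bar>x'\<bar>" "\<bar>x'\<bar> \<le> pi" using b by auto
  have "(cos g \<le> cos \<bar>x'\<bar>) = (\<bar>x'\<bar> \<le> g)"
    by (rule cos_mono_le_eq) (use x0 assms in auto)
  with c have "\<bar>x'\<bar> \<le> g" by blast
  thus ?thesis unfolding x'_def by blast
qed

section \<open>Regular polygon basics\<close>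

definition vang :: "nat \<Rightarrow> real \<Rightarrow> int \<Rightarrow> real" where
  "vang k th J = th + 2*pi* of_int J / real k"

definition vert :: "nat \<Rightarrow> complex \<Rightarrow> real \<Rightarrow> real \<Rightarrow> int \<Rightarrow> complex" where
  "vert k c r th J = c + complex_of_real r * cis (vang k th J)"

lemma vert_mod:
  assumes "k > 0"
  shows "vert k c r th J = vert k c r th (J mod int k)"
proof -
  have "J = int k * (J div int k) + J mod int k" by simp
  hence e: "(of_int J::real) = real k * of_int (J div int k) + of_int (J mod int k)"
    by (metis of_int_add of_int_mult of_int_of_nat_eq)
  have kk: "real k > 0" using assms by simp
  have "vang k th J = vang k th (J mod int k) + 2*pi*(of_int (J div int k)::real)"
    unfolding vang_def e using kk by (simp add: field_simps)
  thus ?thesis unfolding vert_def by (simp only: cis_per)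
qed

lemma vert_in:
  assumes "k > 0"
  shows "vert k c r th J \<in> regular_polygon k c r th"
proof -
  define j where "j = nat (J mod int k)"
  have j: "j < k" "int j = J mod int k" unfolding j_def using assms
    by (simp_all add: nat_less_iff)
  have "vert k c r th J = c + complex_of_real r * cis (th + 2 * pi * real j / real k)"
    using vert_mod[OF assms, of c r th J] unfolding vert_def vang_def j(2)[symmetric]
    by simp
  thus ?thesis unfolding regular_polygon_def using j(1)
    by (intro hull_inc) blast
qed

lemma vert_set:
  "{c + complex_of_real r * cis (th + 2 * pi * real j / real k) | j. j < k} =
   (\<lambda>j. vert k c r th (int j)) ` {..<k}"
  unfolding vert_def vang_def by auto

lemma poly_hull:
  "regular_polygon k c r th = convex hull ((\<lambda>j. vert k c r th (int j)) ` {..<k})"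
  unfolding regular_polygon_def vert_set ..

lemma poly_convex: "convex (regular_polygon k c r th)"
  unfolding regular_polygon_def by (rule convex_convex_hull)

lemma poly_compact: "compact (regular_polygon k c r th)"
  unfolding poly_hull by (intro compact_convex_hull finite_imp_compact) simp

lemma poly_closed: "closed (regular_polygon k c r th)"
  using poly_compact compact_imp_closed by blast

lemma poly_induct:
  assumes "z \<in> regular_polygon k c r th" "convex P"
    "\<And>j. j < k \<Longrightarrow> vert k c r th (int j) \<in> P"
  shows "z \<in> P"
proof -
  have "regular_polygon k c r th \<subseteq> P"
    unfolding poly_hull by (rule hull_minimal) (use assms in auto)
  thus ?thesis using assms(1) by blast
qed

lemma norm_vert: "r \<ge> 0 \<Longrightarrow> norm (vert k c r th J - c) = r"
  unfolding vert_def by (simp add: norm_mult)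

lemma poly_cball:
  assumes "r \<ge> 0" "z \<in> regular_polygon k c r th"
  shows "norm (z - c) \<le> r"
proof -
  have "z \<in> cball c r"
    by (rule poly_induct[OF assms(2) convex_cball])
       (use norm_vert[OF assms(1)] in \<open>simp add: dist_norm norm_minus_commute\<close>)
  thus ?thesis by (simp add: dist_norm norm_minus_commute)
qed

lemma inner_cis_vert:
  "inner (cis a) (vert k c r th J - vert k c r th J') =
     r * (cos (vang k th J - a) - cos (vang k th J' - a))"
  unfolding vert_def by (simp add: inner_complex_def cos_diff algebra_simps)

lemma convex_supp: "convex {z. inner n (z - w) \<le> (0::real)}"
proof -
  have "{z. inner n (z - w) \<le> 0} = {z. inner n z \<le> inner n w}"
    by (simp add: inner_diff_right)
  thus ?thesis by (simp add: convex_halfspace_le)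
qed

lemma edge_normal:
  assumes k: "k \<ge> 1" and r: "r \<ge> 0" and z: "z \<in> regular_polygon k c r th"
  shows "inner (cis (vang k th J + pi / real k)) (z - vert k c r th J) \<le> 0"
    and "inner (cis (vang k th J - pi / real k)) (z - vert k c r th J) \<le> 0"
proof -
  have key: "inner (cis (vang k th J + of_int e * pi / real k)) (vert k c r th (int j) - vert k c r th J) \<le> 0"
    if e: "e = 1 \<or> e = -1" for j e
  proof -
    have kk: "real k > 0" using k by simp
    define a0 where "a0 = vang k th J + of_int e * pi / real k"
    have eq1: "vang k th (int j) - a0 = of_int (2 * (int j - J) - e) * pi / real k"
      unfolding vang_def a0_def using kk by (simp add: field_simps)
    have eq2: "cos (vang k th J - a0) = cos (pi / real k)"
      unfolding a0_def using e by auto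
    have c1: "cos (of_int (2 * (int j - J) - e) * pi / real k) \<le> cos (pi / real k)"
      by (rule cos_odd_le[OF k]) (use e in auto)
    have "inner (cis a0) (vert k c r th (int j) - vert k c r th J)
          = r * (cos (of_int (2 * (int j - J) - e) * pi / real k) - cos (pi / real k))"
      unfolding inner_cis_vert by (simp only: eq1 eq2)
    also have "\<dots> \<le> 0" using c1 r by (simp add: mult_nonneg_nonpos)
    finally show ?thesis unfolding a0_def .
  qed
  show "inner (cis (vang k th J + pi / real k)) (z - vert k c r th J) \<le> 0"
    using poly_induct[OF z convex_supp, of "cis (vang k th J + pi / real k)" "vert k c r th J"]
      key[of 1] by simp
  show "inner (cis (vang k th J - pi / real k)) (z - vert k c r th J) \<le> 0"
    using poly_induct[OF z convex_supp, of "cis (vang k th J - pi / real k)" "vert k c r th J"]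
      key[of "-1"] by simp
qed

lemma window1:
  assumes "k > 0"
  shows "\<exists>J. a < vang k th J \<and> vang k th J \<le> a + 2*pi / real k"
proof -
  define J where "J = \<lfloor>(a - th) * real k / (2*pi)\<rfloor> + 1"
  have "(of_int J::real) - 1 \<le> (a - th) * real k / (2*pi)"
       "(a - th) * real k / (2*pi) < of_int J"
    unfolding J_def by linarith+
  note h = this
  have kk: "real k > 0" using assms by simp
  have e1: "(of_int J - 1) * (2*pi) \<le> (a - th) * real k"
    using h(1) by (simp add: pos_le_divide_eq)
  have e2: "(a - th) * real k < of_int J * (2*pi)"
    using h(2) by (simp add: pos_divide_less_eq)
  have "(of_int J - 1) * (2*pi) / real k \<le> a - th"
    using e1 kk by (simp add: pos_divide_le_eq)
  moreover have "a - th < of_int J * (2*pi) / real k"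
    using e2 kk by (simp add: pos_less_divide_eq)
  moreover have "(of_int J - 1) * (2*pi) / real k = of_int J * (2*pi) / real k - 2*pi / real k"
    by (simp add: diff_divide_distrib[symmetric] left_diff_distrib)
  moreover have "vang k th J = th + of_int J * (2*pi) / real k" unfolding vang_def by simp
  ultimately have "a < vang k th J \<and> vang k th J \<le> a + 2*pi / real k"
    by linarith
  thus ?thesis by blast
qed

lemma window2:
  assumes "k > 0"
  shows "\<exists>J. a \<le> vang k th J \<and> vang k th J < a + 2*pi / real k"
proof -
  define J where "J = \<lceil>(a - th) * real k / (2*pi)\<rceil>"
  have "(a - th) * real k / (2*pi) \<le> of_int J"
       "(of_int J::real) < (a - th) * real k / (2*pi) + 1"
    unfolding J_def by linarith+
  note h = this
  have kk: "real k > 0" using assms by simp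
  have e1: "(a - th) * real k \<le> of_int J * (2*pi)"
    using h(1) by (simp add: pos_divide_le_eq)
  have e2: "of_int J * (2*pi) < (a - th) * real k + 2*pi"
    using h(2) by (simp add: pos_less_divide_eq field_simps)
  have "a - th \<le> of_int J * (2*pi) / real k"
    using e1 kk by (simp add: pos_le_divide_eq)
  moreover have "of_int J * (2*pi) / real k < a - th + 2*pi / real k"
    using e2 kk by (simp add: pos_divide_less_eq field_simps)
  ultimately have "a \<le> vang k th J \<and> vang k th J < a + 2*pi / real k"
    unfolding vang_def by (simp add: field_simps)
  thus ?thesis by blast
qed

section \<open>General convex geometry in the plane\<close>

definition cross :: "complex \<Rightarrow> complex \<Rightarrow> real" where
  "cross a b = Re a * Im b - Im a * Re b"

lemma cross_diff_right: "cross a (b - c) = cross a b - cross a c"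
  unfolding cross_def by (simp add: algebra_simps)

lemma cross_add_right: "cross a (b + c) = cross a b + cross a c"
  unfolding cross_def by (simp add: algebra_simps)

lemma cross_scale_right: "cross a (of_real s * b) = s * cross a b"
  unfolding cross_def by (simp add: algebra_simps)

lemma cross_self: "cross a a = 0"
  unfolding cross_def by (simp add: algebra_simps)

lemma inner_scale_right_c: "inner (a::complex) (of_real s * b) = s * inner a b"
  by (simp add: inner_complex_def algebra_simps)

lemma support_frontier:
  fixes S :: "complex set"
  assumes "convex S" "closed S" "interior S \<noteq> {}" "x \<in> frontier S"
  obtains n where "n \<noteq> 0" "\<And>z. z \<in> S \<Longrightarrow> inner n (z - x) \<le> 0"
proof -
  have ri: "rel_interior S = interior S"
    using assms(3) by (rule rel_interior_nonempty_interior)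
  have "x \<in> closure S" "x \<notin> rel_interior S"
    using assms(4) unfolding frontier_def ri by auto
  then obtain a where a: "a \<noteq> 0" "\<And>y. y \<in> closure S \<Longrightarrow> a \<bullet> x \<le> a \<bullet> y"
    using supporting_hyperplane_relative_frontier[OF assms(1)] by metis
  show ?thesis
  proof (rule that[of "-a"])
    show "-a \<noteq> 0" using a(1) by simp
    fix z assume "z \<in> S"
    hence "a \<bullet> x \<le> a \<bullet> z" using a(2) closure_subset by blast
    thus "inner (-a) (z - x) \<le> 0" by (simp add: inner_diff_right)
  qed
qed

lemma frontier_of_support:
  fixes S :: "complex set"
  assumes "closed S" "n \<noteq> 0" "\<And>z. z \<in> S \<Longrightarrow> inner n (z - a) \<le> 0"
    "w \<in> S" "inner n (w - a) = 0"
  shows "w \<in> frontier S"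
proof -
  have "w \<notin> interior S"
  proof
    assume "w \<in> interior S"
    then obtain e where e: "e > 0" "ball w e \<subseteq> S"
      using mem_interior by blast
    define z where "z = w + of_real (e / 2 / norm n) * n"
    have "norm (of_real (e / 2 / norm n) * n) = e / 2"
      by (simp only: norm_mult norm_of_real) (use e(1) assms(2) in simp)
    hence "dist w z = e / 2" unfolding z_def dist_norm by simp
    hence "z \<in> S" using e by auto
    hence "inner n (z - a) \<le> 0" using assms(3) by blast
    moreover have "inner n (z - a) = inner n (w - a) + e / 2 / norm n * (norm n)^2"
    proof -
      have "z - a = (w - a) + of_real (e / 2 / norm n) * n" unfolding z_def by simp
      hence "inner n (z - a) = inner n (w - a) + e / 2 / norm n * inner n n"
        by (simp only: inner_add_right inner_scale_right_c)
      thus ?thesis by (simp only: power2_norm_eq_inner)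
    qed
    moreover have "e / 2 / norm n * (norm n)^2 > 0" using e(1) assms(2) by simp
    ultimately show False using assms(5) by linarith
  qed
  thus ?thesis using assms(4) assms(1) unfolding frontier_def by (simp add: closure_closed)
qed

lemma SH_contra:
  fixes S :: "complex set"
  assumes S: "convex S" "closed S" "interior S \<noteq> {}" and x: "x \<in> frontier S"
    and d: "d \<noteq> 0" and ab: "\<alpha> > 0" "\<beta> > 0"
    and p1: "x + of_real \<alpha> * d \<in> S" and p2: "x - of_real \<beta> * d \<in> S"
    and u: "u1 \<in> S" "u2 \<in> S" "cross d (u1 - x) > 0" "cross d (u2 - x) < 0"
  shows False
proof -
  obtain n where n: "n \<noteq> 0" "\<And>z. z \<in> S \<Longrightarrow> inner n (z - x) \<le> 0"
    using support_frontier[OF S x] by blast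
  have "inner n (of_real \<alpha> * d) \<le> 0" using n(2)[OF p1] by simp
  hence "\<alpha> * inner n d \<le> 0" by (simp add: inner_scale_right_c)
  hence nd1: "inner n d \<le> 0" using ab(1) by (simp add: mult_le_0_iff)
  have "inner n (- (of_real \<beta> * d)) \<le> 0" using n(2)[OF p2] by simp
  hence "\<beta> * inner n d \<ge> 0" by (simp add: inner_scale_right_c)
  hence "inner n d \<ge> 0" using ab(2) by (simp add: zero_le_mult_iff)
  hence nd: "Re n * Re d + Im n * Im d = 0" using nd1 by (simp add: inner_complex_def)
  define L where "L = Im n * Re d - Re n * Im d"
  have ident: "((Re d)^2 + (Im d)^2) * inner n w = L * cross d w" for w
  proof -
    have "((Re d)^2 + (Im d)^2) * inner n w = L * cross d w + (Re n * Re d + Im n * Im d) * (Re d * Re w + Im d * Im w)"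
      unfolding L_def cross_def inner_complex_def by (simp add: power2_eq_square algebra_simps)
    thus ?thesis using nd by simp
  qed
  have dpos: "(Re d)^2 + (Im d)^2 > 0" using d
    by (metis complex_neq_0 power2_eq_square)
  have "((Re d)^2 + (Im d)^2) * inner n (u1 - x) \<le> 0"
    using n(2)[OF u(1)] dpos by (simp add: mult_nonneg_nonpos)
  hence "L * cross d (u1 - x) \<le> 0" using ident[of "u1 - x"] by simp
  hence L1: "L \<le> 0" using u(3) by (simp add: mult_le_0_iff)
  have "((Re d)^2 + (Im d)^2) * inner n (u2 - x) \<le> 0"
    using n(2)[OF u(2)] dpos by (simp add: mult_nonneg_nonpos)
  hence "L * cross d (u2 - x) \<le> 0" using ident[of "u2 - x"] by simp
  hence "L \<ge> 0" using u(4) by (simp add: mult_le_0_iff)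
  hence L0: "L = 0" using L1 by simp
  have "Re n * ((Re d)^2 + (Im d)^2) = Re d * (Re n * Re d + Im n * Im d) - Im d * L"
    unfolding L_def by (simp add: power2_eq_square algebra_simps)
  hence "Re n * ((Re d)^2 + (Im d)^2) = 0" using nd L0 by simp
  hence "Re n = 0" using dpos by (metis mult_eq_0_iff less_irrefl)
  moreover have "Im n * ((Re d)^2 + (Im d)^2) = Im d * (Re n * Re d + Im n * Im d) + Re d * L"
    unfolding L_def by (simp add: power2_eq_square algebra_simps)
  hence "Im n * ((Re d)^2 + (Im d)^2) = 0" using nd L0 by simp
  hence "Im n = 0" using dpos by (metis mult_eq_0_iff less_irrefl)
  ultimately show False using n(1) by (simp add: complex_eq_iff)
qed

lemma parallel_decomp:
  assumes "cross t w = 0" "t \<noteq> 0"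
  shows "w = of_real (inner t w / (norm t)^2) * t"
proof -
  have np: "(norm t)^2 = (Re t)^2 + (Im t)^2" by (simp add: cmod_def)
  have pos: "(Re t)^2 + (Im t)^2 > 0" using assms(2)
    by (metis complex_neq_0 power2_eq_square)
  have c: "Re t * Im w = Im t * Re w" using assms(1) unfolding cross_def by simp
  define D where "D = (Re t)^2 + (Im t)^2"
  have Dn: "D \<noteq> 0" using pos unfolding D_def by linarith
  have r1: "Re w = (Re t * Re w + Im t * Im w) / ((Re t)^2 + (Im t)^2) * Re t"
  proof -
    have h: "(Re t * Re w + Im t * Im w) * Re t = Re w * D"
      using c unfolding D_def by (simp add: power2_eq_square algebra_simps)
    have "(Re t * Re w + Im t * Im w) / D * Re t = (Re t * Re w + Im t * Im w) * Re t / D"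
      by simp
    also have "\<dots> = Re w" using h Dn by simp
    finally show ?thesis unfolding D_def by simp
  qed
  have r2: "Im w = (Re t * Re w + Im t * Im w) / ((Re t)^2 + (Im t)^2) * Im t"
  proof -
    have h: "(Re t * Re w + Im t * Im w) * Im t = Im w * D"
      using c unfolding D_def by (simp add: power2_eq_square algebra_simps)
    have "(Re t * Re w + Im t * Im w) / D * Im t = (Re t * Re w + Im t * Im w) * Im t / D"
      by simp
    also have "\<dots> = Im w" using h Dn by simp
    finally show ?thesis unfolding D_def by simp
  qed
  show ?thesis unfolding np
    by (rule complex_eqI) (simp_all add: inner_complex_def, (subst r1; simp), (subst r2; simp))
qed

lemma scaleR_c: "a *\<^sub>R (z::complex) = of_real a * z"
  by (simp add: scaleR_conv_of_real)

lemma seg_frontier_pos: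
  fixes S :: "complex set"
  assumes S: "convex S" "closed S" "interior S \<noteq> {}"
    and xy: "x \<in> S" "y \<in> S" "x - t \<in> S" "y - t \<in> frontier S"
    and s: "y - x = of_real s * t" "s > 0"
  shows "closed_segment x y \<subseteq> frontier S \<inter> frontier ((+) t ` S)"
proof
  fix w assume w: "w \<in> closed_segment x y"
  obtain n where n: "n \<noteq> 0" "\<And>z. z \<in> S \<Longrightarrow> inner n (z - (y - t)) \<le> 0"
    using support_frontier[OF S xy(4)] by blast
  have "inner n ((x - t) - (y - t)) \<le> 0" using n(2)[OF xy(3)] .
  moreover have "(x - t) - (y - t) = - (of_real s * t)" using s(1)
    by (simp add: algebra_simps)
  ultimately have "- (s * inner n t) \<le> 0" by (simp add: inner_scale_right_c)
  hence nt1: "inner n t \<ge> 0" using s(2) by (simp add: zero_le_mult_iff)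
  have "inner n (y - (y - t)) \<le> 0" using n(2)[OF xy(2)] .
  hence nt: "inner n t = 0" using nt1 by simp
  obtain u where u: "0 \<le> u" "u \<le> 1" "w = of_real (1 - u) * x + of_real u * y"
    using w unfolding closed_segment_def scaleR_c by blast
  have wS: "w \<in> S" using w convex_contains_segment S(1) xy(1,2) by blast
  have "w - (y - t) = of_real ((1 - u) * (- s) + 1) * t"
    using u(3) s(1) by (simp add: algebra_simps)
  hence "inner n (w - (y - t)) = 0" by (simp only: inner_scale_right_c nt mult_zero_right)
  hence f1: "w \<in> frontier S" using frontier_of_support[OF S(2) n(1) n(2) wS] by blast
  have "w - t = of_real (1 - u) * (x - t) + of_real u * (y - t)"
    using u(3) by (simp add: algebra_simps)
  moreover have "y - t \<in> S" using xy(4) S(2) frontier_subset_closed by blast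
  ultimately have wtS: "w - t \<in> S"
    using convex_contains_segment[of S] S(1) xy(3) u(1,2) unfolding closed_segment_def scaleR_c
    by blast
  have "w - t - (y - t) = of_real ((1 - u) * (- s)) * t"
    using u(3) s(1) by (simp add: algebra_simps)
  hence "inner n (w - t - (y - t)) = 0" by (simp only: inner_scale_right_c nt mult_zero_right)
  hence "w - t \<in> frontier S" using frontier_of_support[OF S(2) n(1) n(2) wtS] by blast
  hence "w \<in> (+) t ` frontier S" by (metis add.commute diff_add_cancel image_eqI)
  hence "w \<in> frontier ((+) t ` S)" by (simp add: frontier_translation)
  thus "w \<in> frontier S \<inter> frontier ((+) t ` S)" using f1 by blast
qed

lemma same_height:
  fixes S :: "complex set"
  assumes S: "convex S" "closed S" "interior S \<noteq> {}" and t: "t \<noteq> 0"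
    and xy: "x \<in> frontier S" "y \<in> frontier S" "x - t \<in> frontier S" "y - t \<in> frontier S"
    and c: "cross t (y - x) = 0"
  shows "closed_segment x y \<subseteq> frontier S \<inter> frontier ((+) t ` S)"
proof -
  have fs: "frontier S \<subseteq> S" using S(2) frontier_subset_closed by blast
  define s where "s = inner t (y - x) / (norm t)^2"
  have s: "y - x = of_real s * t" unfolding s_def using parallel_decomp[OF c t] .
  consider "s > 0" | "s = 0" | "s < 0" by linarith
  thus ?thesis
  proof cases
    case 1
    show ?thesis by (rule seg_frontier_pos[OF S _ _ _ _ s 1]) (use xy fs in auto)
  next
    case 2
    hence "y = x" using s by simp
    moreover have "x \<in> frontier ((+) t ` S)"
      using xy(3) by (simp add: frontier_translation) (metis add.commute diff_add_cancel image_eqI)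
    ultimately show ?thesis using xy(1) by simp
  next
    case 3
    have s': "x - y = of_real (-s) * t" using s by (simp add: algebra_simps)
    have "closed_segment y x \<subseteq> frontier S \<inter> frontier ((+) t ` S)"
      by (rule seg_frontier_pos[OF S _ _ _ _ s']) (use xy fs 3 in auto)
    thus ?thesis by (simp add: closed_segment_commute)
  qed
qed

lemma line_in_segment:
  fixes S :: "complex set"
  assumes S: "convex S" "closed S" "interior S \<noteq> {}"
    and xy: "x \<in> frontier S" "y \<in> frontier S" "x \<noteq> y"
    and z: "z \<in> S" "cross (y - x) (z - x) = 0"
    and u: "u1 \<in> S" "u2 \<in> S" "cross (y - x) (u1 - x) > 0" "cross (y - x) (u2 - x) < 0"
  shows "z \<in> closed_segment x y"
proof -
  have fs: "frontier S \<subseteq> S" using S(2) frontier_subset_closed by blast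
  have d: "y - x \<noteq> 0" using xy(3) by simp
  define s where "s = inner (y - x) (z - x) / (norm (y - x))^2"
  have s: "z - x = of_real s * (y - x)" unfolding s_def using parallel_decomp[OF z(2) d] .
  have zx: "z = of_real s * (y - x) + x" using s by (simp add: diff_eq_eq)
  have "\<not> s < 0"
  proof
    assume "s < 0"
    show False
    proof (rule SH_contra[OF S xy(1) d])
      show "(1::real) > 0" "- s > 0" using \<open>s < 0\<close> by auto
      show "x + of_real 1 * (y - x) \<in> S" using xy(2) fs by auto
      have "x - of_real (- s) * (y - x) = z" by (simp add: zx algebra_simps)
      thus "x - of_real (- s) * (y - x) \<in> S" using z(1) by simp
    qed (use u in auto)
  qed
  moreover have "\<not> s > 1"
  proof
    assume "s > 1"
    have cu: "cross (y - x) (u - y) = cross (y - x) (u - x)" for u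
      using cross_diff_right[of "y - x" "u - x" "y - x"] cross_self[of "y - x"]
      by (simp add: algebra_simps)
    show False
    proof (rule SH_contra[OF S xy(2) d])
      show "s - 1 > 0" "(1::real) > 0" using \<open>s > 1\<close> by auto
      have "y + of_real (s - 1) * (y - x) = z" by (simp add: zx algebra_simps)
      thus "y + of_real (s - 1) * (y - x) \<in> S" using z(1) by simp
      show "y - of_real 1 * (y - x) \<in> S" using xy(1) fs by auto
    qed (use u cu in auto)
  qed
  ultimately have "0 \<le> s" "s \<le> 1" by auto
  moreover have "z = of_real (1 - s) * x + of_real s * y" by (simp add: zx algebra_simps)
  ultimately show ?thesis unfolding closed_segment_def scaleR_c by blast
qed

lemma three_cases:
  fixes a b c :: real assumes "b \<noteq> c"
  shows "(a - b) * (a - c) \<le> 0 \<or> (a - b) * (b - c) > 0 \<or> (a - c) * (c - b) > 0"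
proof (cases "b < c")
  case True
  then show ?thesis
    by (cases "a \<le> b"; cases "a \<le> c") (auto simp: mult_le_0_iff intro!: mult_pos_pos mult_neg_neg)
next
  case False
  hence "c < b" using assms by simp
  then show ?thesis
    by (cases "a \<le> b"; cases "a \<le> c") (auto simp: mult_le_0_iff intro!: mult_pos_pos mult_neg_neg)
qed
lemma between_ratio:
  fixes a b c :: real assumes "b \<noteq> c" "(a - b) * (a - c) \<le> 0"
  shows "0 \<le> (a - b) / (c - b)" "(a - b) / (c - b) \<le> 1"
proof -
  have "(b \<le> a \<and> a \<le> c) \<or> (c \<le> a \<and> a \<le> b)" using assms(2)
    by (auto simp: mult_le_0_iff)
  thus "0 \<le> (a - b) / (c - b)" "(a - b) / (c - b) \<le> 1" using assms(1)
    by (auto simp: divide_simps)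
qed

lemma ratio_01:
  fixes A B :: real
  assumes "A * B > 0"
  shows "0 < B / (A + B)" "B / (A + B) < 1"
proof -
  have "(A > 0 \<and> B > 0) \<or> (A < 0 \<and> B < 0)" using assms
    by (simp add: zero_less_mult_iff)
  thus "0 < B / (A + B)" "B / (A + B) < 1"
    by (auto simp: divide_pos_pos divide_neg_neg divide_less_eq)
qed

lemma cross_swap:
  "cross (x - y) (z - y) * cross (x - y) t = cross (y - x) (z - x) * cross (y - x) t"
  unfolding cross_def by (simp add: algebra_simps)

lemma beyond_contra:
  fixes S :: "complex set"
  assumes S: "convex S" "closed S" "interior S \<noteq> {}" and tau: "\<tau> \<noteq> 0"
    and xy: "x \<in> frontier S" "y \<in> S" "x - \<tau> \<in> S"
    and K: "cross \<tau> (y - x) \<noteq> 0"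
    and v: "v \<in> S" "cross (y - x) (v - x) * cross (y - x) \<tau> > 0"
    and b: "(cross \<tau> v - cross \<tau> x) * (cross \<tau> x - cross \<tau> y) > 0"
  shows False
proof -
  define A where "A = cross \<tau> v - cross \<tau> x"
  define B where "B = cross \<tau> x - cross \<tau> y"
  define l where "l = B / (A + B)"
  have AB: "A * B > 0" using b unfolding A_def B_def .
  have l: "0 < l" "l < 1" unfolding l_def using ratio_01[OF AB] by auto
  have ABn: "A + B \<noteq> 0" using l(1) unfolding l_def by auto
  define w where "w = y + of_real l * (v - y)"
  have "w = of_real (1 - l) * y + of_real l * v" unfolding w_def by (simp add: algebra_simps)
  hence wS: "w \<in> S" using convex_contains_segment[of S] S(1) xy(2) v(1) l
    unfolding closed_segment_def scaleR_c by fastforce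
  have "cross \<tau> (w - x) = cross \<tau> y - cross \<tau> x + l * (cross \<tau> v - cross \<tau> y)"
    unfolding w_def by (simp add: cross_diff_right cross_add_right cross_scale_right)
  also have "\<dots> = - B + l * (A + B)" unfolding A_def B_def by simp
  also have "\<dots> = 0" unfolding l_def using ABn by simp
  finally have c0: "cross \<tau> (w - x) = 0" .
  define s where "s = inner \<tau> (w - x) / (norm \<tau>)^2"
  have ws: "w - x = of_real s * \<tau>" unfolding s_def using parallel_decomp[OF c0 tau] .
  define Kc where "Kc = cross (y - x) \<tau>"
  have "cross (y - x) (w - x) = l * cross (y - x) (v - x)"
  proof -
    have "w - x = (y - x) + of_real l * ((v - x) - (y - x))" unfolding w_def by simp
    hence "cross (y - x) (w - x) = cross (y - x) (y - x) + l * (cross (y - x) (v - x) - cross (y - x) (y - x))"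
      by (simp add: cross_add_right cross_scale_right cross_diff_right)
    thus ?thesis by (simp add: cross_self)
  qed
  hence G1: "cross (y - x) (w - x) * Kc > 0" unfolding Kc_def using v(2) l(1)
    by (simp add: mult.assoc)
  have "cross (y - x) (w - x) = s * Kc" unfolding ws Kc_def by (simp add: cross_scale_right)
  hence "s * (Kc * Kc) > 0" using G1 by (simp add: mult.assoc)
  hence spos: "s > 0" by (auto simp: zero_less_mult_iff not_square_less_zero)
  show False
  proof (cases "A > 0")
    case True
    hence Bp: "B > 0" using AB by (auto simp: zero_less_mult_iff)
    show False
    proof (rule SH_contra[OF S xy(1) tau spos zero_less_one])
      show "x + of_real s * \<tau> \<in> S" using wS ws by (metis add.commute diff_add_cancel)
      show "x - of_real 1 * \<tau> \<in> S" using xy(3) by simp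
      show "v \<in> S" "y \<in> S" using v(1) xy(2) by auto
      show "cross \<tau> (v - x) > 0" using True unfolding A_def by (simp add: cross_diff_right)
      show "cross \<tau> (y - x) < 0" using Bp unfolding B_def by (simp add: cross_diff_right)
    qed
  next
    case False
    have Am: "A < 0" and Bm: "B < 0" using AB False by (auto simp: zero_less_mult_iff)
    show False
    proof (rule SH_contra[OF S xy(1) tau spos zero_less_one])
      show "x + of_real s * \<tau> \<in> S" using wS ws by (metis add.commute diff_add_cancel)
      show "x - of_real 1 * \<tau> \<in> S" using xy(3) by simp
      show "y \<in> S" "v \<in> S" using v(1) xy(2) by auto
      show "cross \<tau> (y - x) > 0" using Bm unfolding B_def by (simp add: cross_diff_right)
      show "cross \<tau> (v - x) < 0" using Am unfolding A_def by (simp add: cross_diff_right)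
    qed
  qed
qed

lemma normal_side:
  fixes S :: "complex set"
  assumes S: "convex S" "closed S" "interior S \<noteq> {}" and tau: "\<tau> \<noteq> 0"
    and xy: "x \<in> frontier S" "y \<in> frontier S" "x - \<tau> \<in> S" "y - \<tau> \<in> S"
    and K: "cross \<tau> (y - x) \<noteq> 0"
    and v: "v \<in> S" "cross (y - x) (v - x) * cross (y - x) \<tau> > 0"
    and n: "\<And>z. z \<in> S \<Longrightarrow> inner n (z - v) \<le> 0"
  shows "inner n \<tau> \<ge> 0"
proof (rule ccontr)
  assume "\<not> inner n \<tau> \<ge> 0"
  hence nt: "inner n \<tau> < 0" by simp
  have fs: "frontier S \<subseteq> S" using S(2) frontier_subset_closed by blast
  have xS: "x \<in> S" and yS: "y \<in> S" using xy fs by auto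
  define hx where "hx = cross \<tau> x"
  define hy where "hy = cross \<tau> y"
  define hv where "hv = cross \<tau> v"
  have hxy: "hy - hx \<noteq> 0" using K unfolding hx_def hy_def by (simp add: cross_diff_right)
  consider "(hv - hx) * (hv - hy) \<le> 0" | "(hv - hx) * (hx - hy) > 0" | "(hv - hy) * (hy - hx) > 0"
  proof -
    have "hx \<noteq> hy" using hxy by simp
    thus ?thesis using that three_cases[of hx hy hv] by linarith
  qed
  thus False
  proof cases
    case 1
    define l where "l = (hv - hx) / (hy - hx)"
    have l: "0 \<le> l" "l \<le> 1" unfolding l_def using between_ratio[of hx hy hv] 1 hxy by auto
    define z0 where "z0 = x + of_real l * (y - x)"
    have "z0 = of_real (1 - l) * x + of_real l * y" unfolding z0_def by (simp add: algebra_simps)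
    hence z0S: "z0 \<in> S" using convex_contains_segment[of S] S(1) xS yS l
      unfolding closed_segment_def scaleR_c by fastforce
    have "cross \<tau> (z0 - v) = hx + l * (hy - hx) - hv"
      unfolding z0_def hx_def hy_def hv_def
      by (simp add: cross_diff_right cross_add_right cross_scale_right)
    also have "\<dots> = 0" unfolding l_def using hxy by simp
    finally have c0: "cross \<tau> (z0 - v) = 0" .
    define s where "s = inner \<tau> (z0 - v) / (norm \<tau>)^2"
    have zs: "z0 - v = of_real s * \<tau>" unfolding s_def using parallel_decomp[OF c0 tau] .
    define Kc where "Kc = cross (y - x) \<tau>"
    have "v - x = of_real l * (y - x) - of_real s * \<tau>" using zs unfolding z0_def
      by (simp add: algebra_simps)
    hence "cross (y - x) (v - x) = - s * Kc" unfolding Kc_def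
      by (simp add: cross_diff_right cross_scale_right cross_self)
    hence "(- s) * (Kc * Kc) > 0" using v(2) unfolding Kc_def by (simp add: mult.assoc)
    hence "s < 0" by (auto simp: zero_less_mult_iff mult_less_0_iff not_square_less_zero)
    hence "inner n (z0 - v) > 0" unfolding zs using nt
      by (simp add: inner_scale_right_c mult_neg_neg)
    thus False using n[OF z0S] by simp
  next
    case 2
    show False
      by (rule beyond_contra[OF S tau xy(1) yS xy(3) K v])
         (use 2 in \<open>simp add: hx_def hy_def hv_def\<close>)
  next
    case 3
    show False
    proof (rule beyond_contra[OF S tau xy(2) xS xy(4) _ v(1)])
      show "cross \<tau> (x - y) \<noteq> 0" using K by (simp add: cross_diff_right)
      show "cross (x - y) (v - y) * cross (x - y) \<tau> > 0" using v(2) by (simp add: cross_swap)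
      show "(cross \<tau> v - cross \<tau> y) * (cross \<tau> y - cross \<tau> x) > 0"
        using 3 by (simp add: hx_def hy_def hv_def)
    qed
  qed
qed

definition cosang :: "complex \<Rightarrow> complex \<Rightarrow> real" where
  "cosang u v = inner u v / (norm u * norm v)"

lemma cosang_sym: "cosang u v = cosang v u"
  unfolding cosang_def by (simp add: inner_commute mult.commute)

lemma cosang_le1: "cosang u v \<le> 1"
proof (cases "u = 0 \<or> v = 0")
  case True thus ?thesis by (auto simp: cosang_def)
next
  case False
  hence "norm u * norm v > 0" by simp
  moreover have "inner u v \<le> norm u * norm v" by (rule norm_cauchy_schwarz)
  ultimately show ?thesis unfolding cosang_def by (simp add: divide_le_eq_1)
qed

lemma cosang_ge_m1: "cosang u v \<ge> -1"
proof (cases "u = 0 \<or> v = 0")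
  case True thus ?thesis by (auto simp: cosang_def)
next
  case False
  hence p: "norm u * norm v > 0" by simp
  have "\<bar>inner u v\<bar> \<le> norm u * norm v" by (rule Cauchy_Schwarz_ineq2)
  hence "- (norm u * norm v) \<le> inner u v" by linarith
  thus ?thesis unfolding cosang_def using p by (simp add: le_divide_eq)
qed

lemma cosang_mult: "a \<noteq> 0 \<Longrightarrow> cosang (a * u) (a * v) = cosang u v"
proof -
  assume a: "a \<noteq> 0"
  have "inner (a * u) (a * v) = ((Re a)^2 + (Im a)^2) * inner u v"
    by (simp add: inner_complex_def power2_eq_square algebra_simps)
  hence "inner (a * u) (a * v) = (norm a)^2 * inner u v" by (simp only: cmod_power2)
  moreover have "norm (a * u) * norm (a * v) = (norm a)^2 * (norm u * norm v)"
    by (simp add: norm_mult power2_eq_square)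
  ultimately show ?thesis unfolding cosang_def using a by simp
qed

lemma cosang_scale:
  assumes "l > 0" "m > 0"
  shows "cosang (of_real l * u) (of_real m * v) = cosang u v"
proof -
  have "inner (of_real l * u) (of_real m * v) = l * m * inner u v"
    by (simp add: inner_complex_def algebra_simps)
  moreover have "norm (of_real l * u) * norm (of_real m * v) = l * m * (norm u * norm v)"
    using assms by (simp add: norm_mult)
  ultimately show ?thesis unfolding cosang_def using assms by simp
qed

lemma cosang_div:
  assumes "u \<noteq> 0"
  shows "cosang u v = Re (v / u) / norm (v / u)"
proof -
  have "cosang u v = cosang (u * 1) (u * (v / u))" using assms by simp
  also have "\<dots> = cosang 1 (v / u)" using cosang_mult assms by blast
  also have "\<dots> = Re (v / u) / norm (v / u)" unfolding cosang_def
    by (simp add: inner_complex_def)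
  finally show ?thesis .
qed

lemma mult_sqrt_le:
  fixes a b A B :: real
  assumes "0 \<le> b" "0 \<le> A" "0 \<le> B" "a^2 * A \<le> b^2 * B"
  shows "a * sqrt A \<le> b * sqrt B"
proof (cases "a \<le> 0")
  case True
  have "a * sqrt A \<le> 0" using True assms by (simp add: mult_nonpos_nonneg)
  moreover have "0 \<le> b * sqrt B" using assms by simp
  ultimately show ?thesis by linarith
next
  case False
  have "(a * sqrt A)^2 \<le> (b * sqrt B)^2"
    using assms by (simp add: power_mult_distrib)
  moreover have "0 \<le> b * sqrt B" using assms by simp
  ultimately show ?thesis by (rule power2_le_imp_le)
qed

lemma key_ss:
  fixes Z :: complex and \<mu> :: real
  assumes mu: "0 \<le> \<mu>" "\<mu> \<le> 1" and Z: "Z \<noteq> 0"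
    and W: "W = of_real (1 - \<mu>) + of_real \<mu> * Z" "W \<noteq> 0"
  shows "Re Z / norm Z \<le> Re W / norm W"
proof -
  define X where "X = Re Z"
  define Y where "Y = Im Z"
  define P where "P = 1 - \<mu> + \<mu> * X"
  define Q where "Q = \<mu> * Y"
  have RW: "Re W = P" "Im W = Q" unfolding P_def Q_def X_def Y_def W(1) by simp_all
  have nZ: "norm Z = sqrt (X^2 + Y^2)" unfolding X_def Y_def cmod_def ..
  have nW: "norm W = sqrt (P^2 + Q^2)" unfolding RW[symmetric] cmod_def ..
  have pZ: "norm Z > 0" and pW: "norm W > 0" using Z W(2) by auto
  have main: "X * norm W \<le> P * norm Z"
  proof -
    consider "X \<le> 0" "P \<ge> 0" | "P < 0" | "X > 0" by linarith
    thus ?thesis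
    proof cases
      case 1
      have "X * norm W \<le> 0" using 1 pW by (simp add: mult_nonpos_nonneg)
      moreover have "0 \<le> P * norm Z" using 1 pZ by simp
      ultimately show ?thesis by linarith
    next
      case 2
      have Xn: "X < 0"
      proof (rule ccontr)
        assume "\<not> X < 0"
        hence "\<mu> * X \<ge> 0" using mu by simp
        thus False using 2 mu unfolding P_def by linarith
      qed
      have h: "\<mu> * X \<le> P" unfolding P_def using mu by simp
      have "(-P)^2 \<le> (-(\<mu> * X))^2" by (rule power_mono) (use h 2 in auto)
      hence "P^2 * Y^2 \<le> (\<mu> * X)^2 * Y^2" by (intro mult_right_mono) simp_all
      moreover have "(-P)^2 * (X^2 + Y^2) = P^2 * X^2 + P^2 * Y^2" by (simp add: algebra_simps)
      moreover have "(-X)^2 * (P^2 + Q^2) = P^2 * X^2 + (\<mu> * X)^2 * Y^2"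
        unfolding Q_def by (simp add: power_mult_distrib algebra_simps)
      ultimately have "(-P)^2 * (X^2 + Y^2) \<le> (-X)^2 * (P^2 + Q^2)" by linarith
      hence "(-P) * sqrt (X^2 + Y^2) \<le> (-X) * sqrt (P^2 + Q^2)"
        by (intro mult_sqrt_le) (use Xn in auto)
      thus ?thesis unfolding nZ nW by simp
    next
      case 3
      have h: "\<mu> * X \<le> P" unfolding P_def using mu by simp
      have mX: "\<mu> * X \<ge> 0" using 3 mu by simp
      have Pp: "P > 0"
      proof (cases "\<mu> < 1")
        case True thus ?thesis using mX unfolding P_def by linarith
      next
        case False hence "\<mu> = 1" using mu by simp
        thus ?thesis using 3 unfolding P_def by simp
      qed
      have "(\<mu> * X)^2 \<le> P^2" by (rule power_mono) (use h mX in auto)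
      hence "(\<mu> * X)^2 * Y^2 \<le> P^2 * Y^2" by (intro mult_right_mono) simp_all
      moreover have "P^2 * (X^2 + Y^2) = P^2 * X^2 + P^2 * Y^2" by (simp add: algebra_simps)
      moreover have "X^2 * (P^2 + Q^2) = P^2 * X^2 + (\<mu> * X)^2 * Y^2"
        unfolding Q_def by (simp add: power_mult_distrib algebra_simps)
      ultimately have "X^2 * (P^2 + Q^2) \<le> P^2 * (X^2 + Y^2)" by linarith
      hence "X * sqrt (P^2 + Q^2) \<le> P * sqrt (X^2 + Y^2)"
        by (intro mult_sqrt_le) (use Pp in auto)
      thus ?thesis unfolding nZ nW by simp
    qed
  qed
  show ?thesis unfolding X_def[symmetric] RW using main pZ pW
    by (simp add: field_simps)
qed

lemma cosang_self: "z \<noteq> 0 \<Longrightarrow> cosang z z = 1"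
  unfolding cosang_def by (simp add: power2_norm_eq_inner[symmetric] power2_eq_square)

lemma SS1:
  assumes u: "u1 \<noteq> 0" "u2 \<noteq> 0" and mu: "0 \<le> \<mu>" "\<mu> \<le> 1"
    and w: "w = of_real (1 - \<mu>) * u1 + of_real \<mu> * u2" "w \<noteq> 0"
  shows "cosang u1 u2 \<le> cosang u1 w"
proof -
  have W: "w / u1 = of_real (1 - \<mu>) + of_real \<mu> * (u2 / u1)"
    using u(1) unfolding w(1) by (simp add: field_simps)
  have "Re (u2 / u1) / norm (u2 / u1) \<le> Re (w / u1) / norm (w / u1)"
    by (rule key_ss[OF mu _ W]) (use u w(2) in auto)
  thus ?thesis using cosang_div[OF u(1)] by simp
qed

lemma SS2_aux:
  assumes ab: "a \<noteq> 0" "b \<noteq> 0"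
    and z1: "z1 = of_real (1 - \<mu>1) * a + of_real \<mu>1 * b" "z1 \<noteq> 0"
    and z2: "z2 = of_real (1 - \<mu>2) * a + of_real \<mu>2 * b" "z2 \<noteq> 0"
    and mu: "0 \<le> \<mu>1" "\<mu>1 \<le> \<mu>2" "\<mu>2 \<le> 1"
  shows "cosang a b \<le> cosang z1 z2"
proof (cases "\<mu>2 = 0")
  case True
  hence "z1 = z2" using mu z1 z2 by simp
  thus ?thesis using cosang_self[OF z1(2)] cosang_le1[of a b] by simp
next
  case False
  hence m2: "\<mu>2 > 0" using mu by simp
  have s1: "cosang a b \<le> cosang a z2"
    by (rule SS1[OF ab _ _ z2]) (use mu in auto)
  define \<nu> where "\<nu> = 1 - \<mu>1 / \<mu>2"
  have nu: "0 \<le> \<nu>" "\<nu> \<le> 1" unfolding \<nu>_def using mu m2 by (auto simp: divide_simps)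
  have "z1 = of_real (1 - \<nu>) * z2 + of_real \<nu> * a"
    unfolding \<nu>_def z1(1) z2(1) using m2 by (simp add: field_simps)
  hence s2: "cosang z2 a \<le> cosang z2 z1"
    by (intro SS1[OF z2(2) ab(1) nu]) (use z1(2) in auto)
  show ?thesis using s1 s2 cosang_sym[of a z2] cosang_sym[of z2 z1] by simp
qed

lemma SS2:
  assumes ab: "a \<noteq> 0" "b \<noteq> 0"
    and z1: "z1 = of_real (1 - \<mu>1) * a + of_real \<mu>1 * b" "z1 \<noteq> 0"
    and z2: "z2 = of_real (1 - \<mu>2) * a + of_real \<mu>2 * b" "z2 \<noteq> 0"
    and mu: "0 \<le> \<mu>1" "\<mu>1 \<le> 1" "0 \<le> \<mu>2" "\<mu>2 \<le> 1"
  shows "cosang a b \<le> cosang z1 z2"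
proof (cases "\<mu>1 \<le> \<mu>2")
  case True thus ?thesis using SS2_aux[OF ab z1 z2] mu by simp
next
  case False thus ?thesis using SS2_aux[OF ab z2 z1] mu cosang_sym[of z1 z2] by simp
qed

lemma inscribed:
  assumes r: "r > 0" and g: "0 < \<gamma>" "\<gamma> < pi"
    and q: "norm (q - c) \<le> r" "inner (cis m) (q - c) \<le> r * cos \<gamma>"
    and w1: "w1 = c + of_real r * cis (m - \<gamma>)" and w2: "w2 = c + of_real r * cis (m + \<gamma>)"
    and qw: "q \<noteq> w1" "q \<noteq> w2"
  shows "cosang (w1 - q) (w2 - q) \<le> cos \<gamma>"
proof -
  define a where "a = of_real r * cis m"
  have a0: "a \<noteq> 0" unfolding a_def using r by simp
  define z where "z = (q - c) / a"
  have qz: "q - c = a * z" unfolding z_def using a0 by simp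
  have cm1: "cis (m - \<gamma>) = cis m * cis (- \<gamma>)" by (simp add: cis_mult)
  have cm2: "cis (m + \<gamma>) = cis m * cis \<gamma>" by (simp add: cis_mult)
  have "w1 - q = of_real r * cis (m - \<gamma>) - (q - c)" unfolding w1 by simp
  also have "\<dots> = a * cis (- \<gamma>) - a * z" unfolding qz a_def cm1 by (simp add: mult.assoc)
  also have "\<dots> = a * (cis (- \<gamma>) - z)" by (simp add: right_diff_distrib)
  finally have e1: "w1 - q = a * (cis (- \<gamma>) - z)" .
  have "w2 - q = of_real r * cis (m + \<gamma>) - (q - c)" unfolding w2 by simp
  also have "\<dots> = a * cis \<gamma> - a * z" unfolding qz a_def cm2 by (simp add: mult.assoc)
  also have "\<dots> = a * (cis \<gamma> - z)" by (simp add: right_diff_distrib)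
  finally have e2: "w2 - q = a * (cis \<gamma> - z)" .
  have ca: "cosang (w1 - q) (w2 - q) = cosang (cis (- \<gamma>) - z) (cis \<gamma> - z)"
    unfolding e1 e2 using cosang_mult[OF a0] by blast
  define C where "C = cos \<gamma>"
  define S where "S = sin \<gamma>"
  define A where "A = C - Re z"
  define y where "y = Im z"
  have Sp: "S > 0" unfolding S_def using g by (simp add: sin_gt_zero)
  have CS: "C^2 + S^2 = 1" unfolding C_def S_def by (simp add: add.commute)
  have nz: "norm z \<le> 1"
  proof -
    have "norm (q - c) = r * norm z" unfolding qz a_def using r by (simp add: norm_mult)
    thus ?thesis using q(1) r by (simp add: mult_le_cancel_left1)
  qed
  have z2: "(Re z)^2 + y^2 \<le> 1" unfolding y_def using nz
    by (metis cmod_power2 power_le_one norm_ge_zero)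
  have cs1: "cos m * cos m + sin m * sin m = 1"
    using sin_cos_squared_add2[of m] by (simp add: power2_eq_square)
  have "inner (cis m) (q - c) = r * (Re z * (cos m * cos m)) + r * (Re z * (sin m * sin m))"
    unfolding qz a_def by (simp add: inner_complex_def algebra_simps)
  also have "\<dots> = r * Re z * (cos m * cos m + sin m * sin m)" by (simp only: distrib_left mult.assoc)
  also have "\<dots> = r * Re z" by (simp only: cs1 mult_1_right)
  finally have "inner (cis m) (q - c) = r * Re z" .
  hence A0: "A \<ge> 0" unfolding A_def C_def using q(2) r by simp
  define P where "P = A^2 - S^2 + y^2"
  define N1 where "N1 = A^2 + (S + y)^2"
  define N2 where "N2 = A^2 + (S - y)^2"
  have u1: "cis (- \<gamma>) - z = Complex A (- S - y)"
    unfolding A_def C_def S_def y_def by (simp add: complex_eq_iff)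
  have u2: "cis \<gamma> - z = Complex A (S - y)"
    unfolding A_def C_def S_def y_def by (simp add: complex_eq_iff)
  have inn: "inner (cis (- \<gamma>) - z) (cis \<gamma> - z) = P"
    unfolding u1 u2 P_def by (simp add: inner_complex_def power2_eq_square algebra_simps)
  have n1: "norm (cis (- \<gamma>) - z) = sqrt N1" unfolding u1 N1_def cmod_def
    by (simp add: power2_eq_square algebra_simps)
  have n2: "norm (cis \<gamma> - z) = sqrt N2" unfolding u2 N2_def cmod_def by simp
  have "cis (- \<gamma>) - z \<noteq> 0" using qw(1) e1 by auto
  hence "sqrt N1 > 0" using n1 by (metis zero_less_norm_iff)
  hence N1p: "N1 > 0" by simp
  have "cis \<gamma> - z \<noteq> 0" using qw(2) e2 by auto
  hence "sqrt N2 > 0" using n2 by (metis zero_less_norm_iff)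
  hence N2p: "N2 > 0" by simp
  have ident: "N1 * N2 = P^2 + 4 * A^2 * S^2"
    unfolding N1_def N2_def P_def by (simp add: power2_eq_square algebra_simps)
  have Pb: "P \<le> 2 * A * C"
  proof -
    have "Re z = C - A" unfolding A_def by simp
    hence "(C - A)^2 + y^2 \<le> C^2 + S^2" using z2 CS by simp
    thus ?thesis unfolding P_def by (simp add: power2_eq_square algebra_simps)
  qed
  define D where "D = sqrt N1 * sqrt N2"
  have Dp: "D > 0" unfolding D_def using N1p N2p by simp
  have D2: "D^2 = P^2 + 4 * A^2 * S^2"
    unfolding D_def using N1p N2p ident by (simp add: power_mult_distrib)
  have S2: "S^2 = 1 - C^2" using CS by simp
  have "(C * D)^2 = C^2 * D^2" by (simp only: power_mult_distrib)
  also have "\<dots> = C^2 * (P^2 + 4 * A^2 * S^2)" by (simp only: D2)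
  also have "\<dots> = C^2 * P^2 + (2 * A * C)^2 * S^2" by (simp add: algebra_simps power2_eq_square)
  finally have eqCD: "(C * D)^2 = C^2 * P^2 + (2 * A * C)^2 * S^2" .
  have eqP: "P^2 = C^2 * P^2 + P^2 * S^2"
  proof -
    have "P^2 * (C^2 + S^2) = P^2" by (simp add: CS)
    thus ?thesis by (simp add: algebra_simps)
  qed
  have main: "P \<le> C * D"
  proof (cases "C \<ge> 0")
    case True
    have CD0: "0 \<le> C * D" using True Dp by simp
    show ?thesis
    proof (cases "P \<le> 0")
      case True thus ?thesis using CD0 by linarith
    next
      case False
      have "P^2 \<le> (2 * A * C)^2" by (rule power_mono[OF Pb]) (use False in linarith)
      hence "P^2 * S^2 \<le> (2 * A * C)^2 * S^2" by (rule mult_right_mono[OF _ zero_le_power2])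
      hence "P^2 \<le> (C * D)^2" using eqCD eqP by linarith
      thus ?thesis using CD0 by (rule power2_le_imp_le)
    qed
  next
    case False
    have AC: "2 * A * C \<le> 0" using A0 False by (simp add: mult_nonneg_nonpos)
    have "(-(2 * A * C))^2 \<le> (-P)^2" by (rule power_mono) (use AC Pb in linarith)+
    hence "(2 * A * C)^2 \<le> P^2" by simp
    hence "(2 * A * C)^2 * S^2 \<le> P^2 * S^2" by (rule mult_right_mono[OF _ zero_le_power2])
    hence "(C * D)^2 \<le> P^2" using eqCD eqP by linarith
    hence "(- (C * D))^2 \<le> (- P)^2" by (simp only: power2_minus)
    hence "- (C * D) \<le> - P" by (rule power2_le_imp_le) (use AC Pb in linarith)
    thus ?thesis by simp
  qed
  have "cosang (cis (- \<gamma>) - z) (cis \<gamma> - z) = P / D"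
    unfolding cosang_def inn n1 n2 D_def ..
  also have "\<dots> \<le> C" using main Dp by (simp add: divide_le_eq mult.commute)
  finally show ?thesis unfolding ca C_def .
qed

lemma convex_aux:
  fixes L1 L2 G1 G2 s :: real
  assumes s: "0 \<le> s" "s \<le> 1" and L: "(1 - s) * L1 + s * L2 \<ge> 0"
    and P1: "L1 \<ge> 0 \<Longrightarrow> G1 \<le> 0" and P2: "L2 \<ge> 0 \<Longrightarrow> G2 \<le> 0"
    and B: "\<And>l. 0 \<le> l \<Longrightarrow> l \<le> 1 \<Longrightarrow> (1 - l) * L1 + l * L2 = 0 \<Longrightarrow> (1 - l) * G1 + l * G2 \<le> 0"
  shows "(1 - s) * G1 + s * G2 \<le> 0"
proof (cases "L1 \<ge> 0 \<and> L2 \<ge> 0")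
  case True
  thus ?thesis using P1 P2 s by (simp add: add_nonpos_nonpos mult_nonneg_nonpos)
next
  case False
  show ?thesis
  proof (cases "L1 < 0")
    case True
    have L20: "L2 \<ge> 0"
    proof (rule ccontr)
      assume "\<not> L2 \<ge> 0"
      hence "s * L2 \<le> 0" using s by (simp add: mult_nonneg_nonpos)
      moreover have "(1 - s) * L1 \<le> 0" using s True by (simp add: mult_nonneg_nonpos)
      ultimately have "(1 - s) * L1 = 0" "s * L2 = 0" using L by linarith+
      hence "s = 1" using True by simp
      thus False using \<open>s * L2 = 0\<close> \<open>\<not> L2 \<ge> 0\<close> by simp
    qed
    hence G2: "G2 \<le> 0" using P2 by simp
    show ?thesis
    proof (cases "L2 = 0")
      case True
      hence "(1 - s) * L1 \<ge> 0" using L by simp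
      hence "s = 1" using \<open>L1 < 0\<close> s by (simp add: zero_le_mult_iff)
      thus ?thesis using G2 by simp
    next
      case False
      hence L2: "L2 > 0" using L20 by simp
      define l where "l = L1 / (L1 - L2)"
      have d: "L1 - L2 < 0" using True L2 by simp
      have l: "0 \<le> l" "l \<le> 1" unfolding l_def using True L2 d by (auto simp: divide_simps)
      have "(1 - l) * L1 + l * L2 = 0" unfolding l_def using d by (simp add: field_simps)
      hence Bl: "(1 - l) * G1 + l * G2 \<le> 0" using B l by blast
      have "s * (L2 - L1) \<ge> - L1" using L by (simp add: algebra_simps)
      hence sl: "s \<ge> l" unfolding l_def using d by (simp add: divide_simps algebra_simps)
      show ?thesis
      proof (cases "G1 \<le> 0")
        case True thus ?thesis using G2 s by (simp add: add_nonpos_nonpos mult_nonneg_nonpos)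
      next
        case False
        have "(1 - s) * G1 + s * G2 = (1 - l) * G1 + l * G2 + (l - s) * (G1 - G2)"
          by (simp add: algebra_simps)
        moreover have "(l - s) * (G1 - G2) \<le> 0" using sl False G2
          by (simp add: mult_nonpos_nonneg)
        ultimately show ?thesis using Bl by linarith
      qed
    qed
  next
    case nL1: False
    hence L1: "L1 \<ge> 0" by simp
    hence L2n: "L2 < 0" using False by simp
    have G1: "G1 \<le> 0" using P1 L1 by simp
    show ?thesis
    proof (cases "L1 = 0")
      case True
      hence "s * L2 \<ge> 0" using L by simp
      hence "s = 0" using L2n s by (simp add: zero_le_mult_iff)
      thus ?thesis using G1 by simp
    next
      case False
      hence L1p: "L1 > 0" using L1 by simp
      define l where "l = L1 / (L1 - L2)"
      have d: "L1 - L2 > 0" using L1p L2n by simp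
      have l: "0 \<le> l" "l \<le> 1" unfolding l_def using L1p L2n d by (auto simp: divide_simps)
      have "(1 - l) * L1 + l * L2 = 0" unfolding l_def using d by (simp add: field_simps)
      hence Bl: "(1 - l) * G1 + l * G2 \<le> 0" using B l by blast
      have "s * (L1 - L2) \<le> L1" using L by (simp add: algebra_simps)
      hence sl: "s \<le> l" unfolding l_def using d by (simp add: divide_simps algebra_simps)
      show ?thesis
      proof (cases "G2 \<le> 0")
        case True thus ?thesis using G1 s by (simp add: add_nonpos_nonpos mult_nonneg_nonpos)
      next
        case False
        have "(1 - s) * G1 + s * G2 = (1 - l) * G1 + l * G2 + (s - l) * (G2 - G1)"
          by (simp add: algebra_simps)
        moreover have "(s - l) * (G2 - G1) \<le> 0" using sl False G1
          by (simp add: mult_nonpos_nonneg)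
        ultimately show ?thesis using Bl by linarith
      qed
    qed
  qed
qed

lemma conv_mem:
  "convex S \<Longrightarrow> p1 \<in> S \<Longrightarrow> p2 \<in> S \<Longrightarrow> 0 \<le> s \<Longrightarrow> s \<le> 1 \<Longrightarrow>
    of_real (1 - s) * p1 + of_real s * (p2::complex) \<in> S"
  using convexD[of S p1 p2 "1 - s" s] by (simp add: scaleR_c)

lemma aff_inner:
  "inner \<eta> (of_real (1 - s) * p1 + of_real s * p2 - a) =
     (1 - s) * inner \<eta> (p1 - a) + s * inner \<eta> (p2 - (a::complex))"
  by (simp add: inner_complex_def algebra_simps)

lemma inner_cis_neg:
  "t = - (of_real \<rho> * cis \<phi>) \<Longrightarrow> inner (cis \<alpha>) t = - \<rho> * cos (\<phi> - \<alpha>)"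
  by (simp add: inner_complex_def cos_diff algebra_simps)

lemma far_vertex:
  assumes k: "k \<ge> 4" and r: "r \<ge> 0" and tphi: "t = - (of_real \<rho> * cis \<phi>)" and rho: "\<rho> > 0"
    and nrm: "\<And>n. (\<forall>z\<in>regular_polygon k c r th. inner n (z - vert k c r th J) \<le> 0) \<Longrightarrow> inner n t \<ge> 0"
    and psi: "\<psi> = vang k th J - 2*pi*(of_int M::real) - \<phi>"
      "- pi/2 - pi/real k < \<psi>" "\<psi> < pi/2 + pi/real k"
  shows False
proof -
  have k1: "k \<ge> 1" using k by simp
  have kk: "real k \<ge> 4" using k by simp
  have pk: "pi / real k \<le> pi / 4" by (rule divide_left_mono) (use kk in auto)
  have pk0: "pi / real k > 0" using kk by simp
  show False
  proof (cases "\<psi> \<le> 0")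
    case True
    define n where "n = cis (vang k th J + pi / real k)"
    have "\<forall>z\<in>regular_polygon k c r th. inner n (z - vert k c r th J) \<le> 0"
      unfolding n_def using edge_normal(1)[OF k1 r] by blast
    hence i0: "inner n t \<ge> 0" by (rule nrm)
    have "\<phi> - (vang k th J + pi / real k) = - (\<psi> + pi / real k) + 2*pi*(of_int (- M)::real)"
      using psi(1) by simp
    hence "cos (\<phi> - (vang k th J + pi / real k)) = cos (\<psi> + pi / real k)"
      by (simp only: cos_per cos_minus)
    moreover have "cos (\<psi> + pi / real k) > 0"
      by (rule cos_gt_zero_pi) (use psi True pk in linarith)+
    ultimately have "inner n t < 0" unfolding n_def using inner_cis_neg[OF tphi] rho
      by (simp add: mult_pos_pos)
    thus False using i0 by simp
  next
    case False
    define n where "n = cis (vang k th J - pi / real k)"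
    have "\<forall>z\<in>regular_polygon k c r th. inner n (z - vert k c r th J) \<le> 0"
      unfolding n_def using edge_normal(2)[OF k1 r] by blast
    hence i0: "inner n t \<ge> 0" by (rule nrm)
    have "\<phi> - (vang k th J - pi / real k) = - (\<psi> - pi / real k) + 2*pi*(of_int (- M)::real)"
      using psi(1) by simp
    hence "cos (\<phi> - (vang k th J - pi / real k)) = cos (\<psi> - pi / real k)"
      by (simp only: cos_per cos_minus)
    moreover have "cos (\<psi> - pi / real k) > 0"
      by (rule cos_gt_zero_pi) (use psi False pk pk0 in linarith)+
    ultimately have "inner n t < 0" unfolding n_def using inner_cis_neg[OF tphi] rho
      by (simp add: mult_pos_pos)
    thus False using i0 by simp
  qed
qed

lemma inner_cis_shift: "inner (cis m) (cis m * z) = Re z"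
proof -
  have cs1: "cos m * cos m + sin m * sin m = 1"
    using sin_cos_squared_add2[of m] by (simp add: power2_eq_square)
  have "inner (cis m) (cis m * z) = Re z * (cos m * cos m) + Re z * (sin m * sin m)"
    by (simp add: inner_complex_def algebra_simps)
  also have "\<dots> = Re z * (cos m * cos m + sin m * sin m)" by (simp only: distrib_left)
  also have "\<dots> = Re z" by (simp only: cs1 mult_1_right)
  finally show ?thesis .
qed

lemma inner_cis_vert_c: "inner (cis m) (vert k c r th J - c) = r * cos (vang k th J - m)"
  unfolding vert_def by (simp add: inner_complex_def cos_diff algebra_simps)

lemma t_polar:
  assumes "t \<noteq> 0"
  shows "t = - (of_real (norm t) * cis (Arg (- t)))"
proof -
  have "cis (Arg (- t)) = sgn (- t)" using assms by (simp add: cis_Arg)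
  hence "of_real (norm t) * cis (Arg (- t)) = of_real (norm t) * (- t / of_real (norm t))"
    by (simp add: sgn_div_norm scaleR_conv_of_real divide_inverse mult.commute)
  also have "\<dots> = - t" using assms by simp
  finally show ?thesis by simp
qed

lemma core:
  fixes k :: nat and c :: complex and r th :: real and t a b q \<eta> :: complex
  assumes k: "k \<ge> 4" and r: "r > 0" and t: "t \<noteq> 0"
    and b: "inner \<eta> (b - a) = 0"
    and qS: "q \<in> regular_polygon k c r th" and qpos: "inner \<eta> (q - a) > 0"
    and line: "\<And>z. z \<in> regular_polygon k c r th \<Longrightarrow> inner \<eta> (z - a) = 0 \<Longrightarrow> z \<in> closed_segment a b"
    and nrm: "\<And>w n. w \<in> regular_polygon k c r th \<Longrightarrow> inner \<eta> (w - a) > 0 \<Longrightarrow>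
                (\<forall>z\<in>regular_polygon k c r th. inner n (z - w) \<le> 0) \<Longrightarrow> inner n t \<ge> 0"
  shows "cosang (a - q) (b - q) \<le> sqrt 2 / 2"
proof -
  let ?S = "regular_polygon k c r th"
  define G where "G z = inner \<eta> (z - a)" for z
  have kpos: "k > 0" and k1: "k \<ge> 1" using k by auto
  have kk: "real k \<ge> 4" using k by simp
  have pk: "pi / real k \<le> pi / 4" by (rule divide_left_mono) (use kk in auto)
  have pk0: "pi / real k > 0" using kk by simp
  have tpk: "2 * pi / real k = 2 * (pi / real k)" by simp
  note pipos = pi_gt_zero
  define \<rho> where "\<rho> = norm t"
  define \<phi> where "\<phi> = Arg (- t)"
  have rho: "\<rho> > 0" unfolding \<rho>_def using t by simp
  have tphi: "t = - (of_real \<rho> * cis \<phi>)" unfolding \<rho>_def \<phi>_def by (rule t_polar[OF t])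
  have vfar: "G (vert k c r th J) \<le> 0"
    if "\<psi> = vang k th J - 2*pi*(of_int M::real) - \<phi>" "- pi/2 - pi/real k < \<psi>" "\<psi> < pi/2 + pi/real k"
    for J M \<psi>
  proof (rule ccontr)
    assume "\<not> G (vert k c r th J) \<le> 0"
    hence gp: "inner \<eta> (vert k c r th J - a) > 0" unfolding G_def by simp
    show False
    proof (rule far_vertex[OF k less_imp_le[OF r] tphi rho _ that])
      fix n assume "\<forall>z\<in>?S. inner n (z - vert k c r th J) \<le> 0"
      thus "inner n t \<ge> 0" using nrm[OF vert_in[OF kpos] gp] by blast
    qed
  qed
  obtain J1 where J1: "\<phi> - pi/2 - pi/real k < vang k th J1"
      "vang k th J1 \<le> \<phi> - pi/2 - pi/real k + 2*pi/real k"
    using window1[OF kpos] by blast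
  obtain J2 where J2: "\<phi> + pi/2 - pi/real k \<le> vang k th J2"
      "vang k th J2 < \<phi> + pi/2 - pi/real k + 2*pi/real k"
    using window2[OF kpos] by blast
  define \<beta>1 where "\<beta>1 = vang k th J1"
  define \<beta>2 where "\<beta>2 = vang k th J2"
  define w1 where "w1 = vert k c r th J1"
  define w2 where "w2 = vert k c r th J2"
  have w1S: "w1 \<in> ?S" and w2S: "w2 \<in> ?S" unfolding w1_def w2_def using vert_in[OF kpos] by auto
  have Gw1: "G w1 \<le> 0" unfolding w1_def
  proof (rule vfar[of "\<beta>1 - \<phi>" J1 0])
    show "\<beta>1 - \<phi> = vang k th J1 - 2*pi*(of_int 0::real) - \<phi>" by (simp add: \<beta>1_def)
    show "- pi/2 - pi/real k < \<beta>1 - \<phi>" using J1 tpk pipos unfolding \<beta>1_def by linarith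
    show "\<beta>1 - \<phi> < pi/2 + pi/real k" using J1 pk0 tpk pipos unfolding \<beta>1_def by linarith
  qed
  have Gw2: "G w2 \<le> 0" unfolding w2_def
  proof (rule vfar[of "\<beta>2 - \<phi>" J2 0])
    show "\<beta>2 - \<phi> = vang k th J2 - 2*pi*(of_int 0::real) - \<phi>" by (simp add: \<beta>2_def)
    show "- pi/2 - pi/real k < \<beta>2 - \<phi>" using J2 pk0 tpk pipos unfolding \<beta>2_def by linarith
    show "\<beta>2 - \<phi> < pi/2 + pi/real k" using J2 tpk pipos unfolding \<beta>2_def by linarith
  qed
  define \<mu> where "\<mu> = (\<beta>1 + \<beta>2) / 2"
  define \<gamma> where "\<gamma> = (\<beta>2 - \<beta>1) / 2"
  have g2g: "2 * \<gamma> = \<beta>2 - \<beta>1" unfolding \<gamma>_def by simp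
  have "\<beta>2 - \<beta>1 \<ge> pi - 2 * pi / real k" unfolding \<beta>1_def \<beta>2_def using J1 J2 tpk by linarith
  hence g1: "\<gamma> \<ge> pi / 4" using g2g pk tpk by linarith
  have "\<beta>2 - \<beta>1 < pi + 2 * pi / real k" unfolding \<beta>1_def \<beta>2_def using J1 J2 tpk by linarith
  hence g2: "\<gamma> < pi" using g2g pk tpk pipos by linarith
  have g0: "\<gamma> > 0" using g1 pipos by linarith
  have w1e: "w1 = c + of_real r * cis (\<mu> - \<gamma>)"
    unfolding w1_def vert_def \<mu>_def \<gamma>_def \<beta>1_def by (simp add: field_simps)
  have w2e: "w2 = c + of_real r * cis (\<mu> + \<gamma>)"
    unfolding w2_def vert_def \<mu>_def \<gamma>_def \<beta>2_def by (simp add: field_simps)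
  define L where "L z = inner (cis \<mu>) (z - c) - r * cos \<gamma>" for z
  have vL: "G (vert k c r th J) \<le> 0" if "L (vert k c r th J) \<ge> 0" for J
  proof -
    have "r * cos (vang k th J - \<mu>) \<ge> r * cos \<gamma>"
      using that unfolding L_def inner_cis_vert_c by simp
    hence "cos (vang k th J - \<mu>) \<ge> cos \<gamma>" using r by simp
    then obtain M :: int where M: "\<bar>vang k th J - \<mu> - 2*pi*(of_int M::real)\<bar> \<le> \<gamma>"
      using cos_ge_arc[of \<gamma>] g0 g2 by auto
    define \<psi> where "\<psi> = vang k th J - 2*pi*(of_int M::real) - \<phi>"
    have m2: "2 * \<mu> = \<beta>1 + \<beta>2" unfolding \<mu>_def by simp
    have "vang k th J - \<mu> - 2*pi*(of_int M::real) \<le> \<gamma>"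
         "- (vang k th J - \<mu> - 2*pi*(of_int M::real)) \<le> \<gamma>" using M by linarith+
    hence "\<psi> \<ge> \<beta>1 - \<phi>" "\<psi> \<le> \<beta>2 - \<phi>" using m2 g2g unfolding \<psi>_def by linarith+
    hence "- pi/2 - pi/real k < \<psi>" "\<psi> < pi/2 + pi/real k"
      using J1 J2 tpk unfolding \<beta>1_def \<beta>2_def by linarith+
    thus ?thesis by (intro vfar[OF \<psi>_def])
  qed
  have Gaff: "G (of_real (1 - s) * p1 + of_real s * p2) = (1 - s) * G p1 + s * G p2" for s p1 p2
    unfolding G_def by (rule aff_inner)
  have Laff: "L (of_real (1 - s) * p1 + of_real s * p2) = (1 - s) * L p1 + s * L p2" for s p1 p2
    unfolding L_def using aff_inner[of "cis \<mu>" s p1 p2 c] by (simp add: algebra_simps)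
  have Sg: "sin \<gamma> > 0" using g0 g2 by (simp add: sin_gt_zero)
  have rS: "r * sin \<gamma> > 0" using r Sg by simp
  have bL: "G m \<le> 0" if mS: "m \<in> ?S" and Lm: "L m = 0" for m
  proof -
    define zq where "zq = (m - c) / cis \<mu>"
    have mz: "m - c = cis \<mu> * zq" unfolding zq_def by simp
    have X: "Re zq = r * cos \<gamma>" using Lm unfolding L_def mz inner_cis_shift by simp
    have "norm zq = norm (m - c)" unfolding mz by (simp add: norm_mult)
    hence nz: "norm zq \<le> r" using poly_cball[OF less_imp_le[OF r] mS] by simp
    have "(Re zq)^2 + (Im zq)^2 \<le> r^2" using nz
      by (metis cmod_power2 norm_ge_zero power_mono)
    moreover have "(r * cos \<gamma>)^2 + (r * sin \<gamma>)^2 = r^2"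
      by (simp add: power_mult_distrib flip: distrib_left)
    ultimately have "(Im zq)^2 \<le> (r * sin \<gamma>)^2" using X by simp
    hence "\<bar>Im zq\<bar>^2 \<le> (r * sin \<gamma>)^2" by (simp only: power2_abs)
    hence "\<bar>Im zq\<bar> \<le> r * sin \<gamma>" using less_imp_le[OF rS] by (rule power2_le_imp_le)
    hence Yb: "- (r * sin \<gamma>) \<le> Im zq" "Im zq \<le> r * sin \<gamma>" by linarith+
    define s' where "s' = (Im zq + r * sin \<gamma>) / (2 * (r * sin \<gamma>))"
    have rS0: "2 * (r * sin \<gamma>) \<noteq> 0" using rS by linarith
    have s'e: "s' * (2 * (r * sin \<gamma>)) = Im zq + r * sin \<gamma>"
      using iffD1[OF nonzero_eq_divide_eq[OF rS0] s'_def] .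
    have s'01: "0 \<le> s'" "s' \<le> 1" unfolding s'_def using Yb rS by (auto simp: divide_simps)
    have key: "of_real r * (of_real (1 - s') * cis (- \<gamma>) + of_real s' * cis \<gamma>) = zq"
    proof (rule complex_eqI)
      show "Re (of_real r * (of_real (1 - s') * cis (- \<gamma>) + of_real s' * cis \<gamma>)) = Re zq"
        using X by (simp add: algebra_simps)
      have "Im (of_real r * (of_real (1 - s') * cis (- \<gamma>) + of_real s' * cis \<gamma>))
            = s' * (2 * (r * sin \<gamma>)) - r * sin \<gamma>" by (simp add: algebra_simps)
      thus "Im (of_real r * (of_real (1 - s') * cis (- \<gamma>) + of_real s' * cis \<gamma>)) = Im zq"
        using s'e by simp
    qed
    have cm1: "cis (\<mu> - \<gamma>) = cis \<mu> * cis (- \<gamma>)" by (simp add: cis_mult)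
    have cm2: "cis (\<mu> + \<gamma>) = cis \<mu> * cis \<gamma>" by (simp add: cis_mult)
    have "of_real (1 - s') * w1 + of_real s' * w2
          = c + cis \<mu> * (of_real r * (of_real (1 - s') * cis (- \<gamma>) + of_real s' * cis \<gamma>))"
      unfolding w1e w2e cm1 cm2 by (simp add: algebra_simps)
    also have "\<dots> = m" unfolding key using mz by (simp add: algebra_simps)
    finally have "m = of_real (1 - s') * w1 + of_real s' * w2" by simp
    hence "G m = (1 - s') * G w1 + s' * G w2" using Gaff by simp
    moreover have "(1 - s') * G w1 \<le> 0" "s' * G w2 \<le> 0"
      using s'01 Gw1 Gw2 by (simp_all add: mult_nonneg_nonpos)
    ultimately show ?thesis by linarith
  qed
  have PS: "G z \<le> 0" if zS: "z \<in> ?S" and Lz: "L z \<ge> 0" for z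
  proof -
    define T where "T = {z \<in> ?S. L z \<ge> 0 \<longrightarrow> G z \<le> 0}"
    have convT: "convex T"
    proof (rule convexI)
      fix x y :: complex and u v :: real
      assume xy: "x \<in> T" "y \<in> T" and uv: "0 \<le> u" "0 \<le> v" "u + v = 1"
      have u: "u = 1 - v" using uv by simp
      define p where "p = of_real (1 - v) * x + of_real v * y"
      have pe: "u *\<^sub>R x + v *\<^sub>R y = p" unfolding p_def u by (simp add: scaleR_c)
      have xS: "x \<in> ?S" and yS: "y \<in> ?S" using xy unfolding T_def by auto
      have pS: "p \<in> ?S" unfolding p_def by (rule conv_mem[OF poly_convex xS yS]) (use uv in auto)
      have "L p \<ge> 0 \<longrightarrow> G p \<le> 0"
      proof
        assume Lp: "L p \<ge> 0"
        have "(1 - v) * G x + v * G y \<le> 0"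
        proof (rule convex_aux)
          show "0 \<le> v" "v \<le> 1" using uv by auto
          show "(1 - v) * L x + v * L y \<ge> 0" using Lp unfolding p_def Laff .
          show "L x \<ge> 0 \<Longrightarrow> G x \<le> 0" "L y \<ge> 0 \<Longrightarrow> G y \<le> 0" using xy unfolding T_def by auto
          fix l :: real assume l: "0 \<le> l" "l \<le> 1" "(1 - l) * L x + l * L y = 0"
          define m0 where "m0 = of_real (1 - l) * x + of_real l * y"
          have "m0 \<in> ?S" unfolding m0_def by (rule conv_mem[OF poly_convex xS yS l(1,2)])
          moreover have "L m0 = 0" unfolding m0_def Laff using l(3) .
          ultimately have "G m0 \<le> 0" by (rule bL)
          thus "(1 - l) * G x + l * G y \<le> 0" unfolding m0_def Gaff .
        qed
        thus "G p \<le> 0" unfolding p_def Gaff .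
      qed
      thus "u *\<^sub>R x + v *\<^sub>R y \<in> T" unfolding pe T_def using pS by blast
    qed
    have "z \<in> T"
    proof (rule poly_induct[OF zS convT])
      fix j assume "j < k"
      show "vert k c r th (int j) \<in> T" unfolding T_def using vert_in[OF kpos] vL by blast
    qed
    thus ?thesis using Lz unfolding T_def by blast
  qed
  have Gq: "G q > 0" using qpos unfolding G_def .
  have Lq: "L q < 0" using PS[OF qS] Gq by force
  have Ga: "G a = 0" and Gb: "G b = 0" unfolding G_def using b by simp_all
  have crossp: "\<exists>lam mu. 0 < lam \<and> lam \<le> 1 \<and> 0 \<le> mu \<and> mu \<le> 1 \<and>
        of_real lam * (w - q) = of_real (1 - mu) * (a - q) + of_real mu * (b - q)"
    if wS: "w \<in> ?S" and Gw: "G w \<le> 0" for w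
  proof -
    define lam where "lam = G q / (G q - G w)"
    have dpos: "G q - G w > 0" using Gq Gw by simp
    have lam: "0 < lam" "lam \<le> 1" unfolding lam_def using Gq Gw dpos by (auto simp: divide_simps)
    define zz where "zz = of_real (1 - lam) * q + of_real lam * w"
    have zzS: "zz \<in> ?S" unfolding zz_def
      by (rule conv_mem[OF poly_convex qS wS]) (use lam in auto)
    have "G zz = (1 - lam) * G q + lam * G w" unfolding zz_def Gaff ..
    also have "\<dots> = G q - lam * (G q - G w)" by (simp add: algebra_simps)
    also have "\<dots> = 0" unfolding lam_def using dpos by simp
    finally have "inner \<eta> (zz - a) = 0" unfolding G_def .
    hence "zz \<in> closed_segment a b" by (rule line[OF zzS])
    then obtain mu where mu: "0 \<le> mu" "mu \<le> 1" "zz = of_real (1 - mu) * a + of_real mu * b"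
      unfolding closed_segment_def scaleR_c by blast
    have "of_real lam * (w - q) = zz - q" unfolding zz_def by (simp add: algebra_simps)
    also have "\<dots> = of_real (1 - mu) * (a - q) + of_real mu * (b - q)"
      unfolding mu(3) by (simp add: algebra_simps)
    finally show ?thesis using lam mu(1,2) by blast
  qed
  obtain lam1 mu1 where c1: "0 < lam1" "lam1 \<le> 1" "0 \<le> mu1" "mu1 \<le> 1"
      "of_real lam1 * (w1 - q) = of_real (1 - mu1) * (a - q) + of_real mu1 * (b - q)"
    using crossp[OF w1S Gw1] by blast
  obtain lam2 mu2 where c2: "0 < lam2" "lam2 \<le> 1" "0 \<le> mu2" "mu2 \<le> 1"
      "of_real lam2 * (w2 - q) = of_real (1 - mu2) * (a - q) + of_real mu2 * (b - q)"
    using crossp[OF w2S Gw2] by blast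
  have aq: "a - q \<noteq> 0" using Ga Gq by auto
  have bq: "b - q \<noteq> 0" using Gb Gq by auto
  have w1q: "q \<noteq> w1" using Gw1 Gq by auto
  have w2q: "q \<noteq> w2" using Gw2 Gq by auto
  have "cosang (a - q) (b - q) \<le> cosang (of_real lam1 * (w1 - q)) (of_real lam2 * (w2 - q))"
    by (rule SS2[OF aq bq c1(5) _ c2(5)]) (use c1 c2 w1q w2q in auto)
  also have "\<dots> = cosang (w1 - q) (w2 - q)" using cosang_scale c1(1) c2(1) by blast
  also have "\<dots> \<le> cos \<gamma>"
  proof (rule inscribed[OF r g0 g2 _ _ w1e w2e w1q w2q])
    show "norm (q - c) \<le> r" using poly_cball[OF less_imp_le[OF r] qS] .
    show "inner (cis \<mu>) (q - c) \<le> r * cos \<gamma>" using Lq unfolding L_def by simp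
  qed
  also have "\<dots> \<le> cos (pi / 4)"
    by (rule cos_monotone_0_pi_le) (use g1 g2 in auto)
  also have "\<dots> = sqrt 2 / 2" by (rule cos_45)
  finally show ?thesis .
qed

lemma inner_eta: "inner (of_real K * (\<i> * a)) w = K * cross a w"
  unfolding cross_def by (simp add: inner_complex_def algebra_simps)

lemma line_in_segment':
  fixes S :: "complex set"
  assumes S: "convex S" "closed S" "interior S \<noteq> {}"
    and xy: "x \<in> frontier S" "y \<in> frontier S" "x \<noteq> y"
    and z: "z \<in> S" "cross (y - x) (z - x) = 0"
    and u: "u1 \<in> S" "u2 \<in> S" "cross (y - x) (u1 - x) * K > 0" "cross (y - x) (u2 - x) * K < 0"
  shows "z \<in> closed_segment x y"
proof (cases "K > 0")
  case True
  hence "cross (y - x) (u1 - x) > 0" "cross (y - x) (u2 - x) < 0" using u(3,4)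
    by (auto simp: zero_less_mult_iff mult_less_0_iff)
  thus ?thesis using line_in_segment[OF S xy z u(1,2)] by blast
next
  case False
  hence "cross (y - x) (u2 - x) > 0" "cross (y - x) (u1 - x) < 0" using u(3,4)
    by (auto simp: zero_less_mult_iff mult_less_0_iff)
  thus ?thesis using line_in_segment[OF S xy z u(2,1)] by blast
qed

lemma cosang_opposite:
  assumes "p \<in> closed_segment x y" "p \<noteq> x" "p \<noteq> y"
  shows "cosang (x - p) (y - p) = -1"
proof -
  obtain u where u: "0 \<le> u" "u \<le> 1" "p = of_real (1 - u) * x + of_real u * y"
    using assms(1) unfolding closed_segment_def scaleR_c by blast
  have u0: "u \<noteq> 0" using u assms(2) by auto
  have u1: "u \<noteq> 1" using u assms(3) by auto
  have xy: "x \<noteq> y" using assms u by auto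
  have "x - p = of_real u * (x - y)" using u(3) by (simp add: algebra_simps)
  moreover have "y - p = of_real (1 - u) * (y - x)" using u(3) by (simp add: algebra_simps)
  ultimately have "cosang (x - p) (y - p) = cosang (x - y) (y - x)"
    using cosang_scale[of u "1 - u" "x - y" "y - x"] u u0 u1 by simp
  also have "\<dots> = -1"
  proof -
    have "inner (x - y) (y - x) = - inner (x - y) (x - y)"
      by (metis inner_minus_right minus_diff_eq)
    also have "\<dots> = - (norm (x - y) * norm (x - y))"
      by (simp add: power2_norm_eq_inner[symmetric] power2_eq_square)
    finally have "inner (x - y) (y - x) = - (norm (x - y) * norm (x - y))" .
    moreover have "norm (x - y) * norm (x - y) \<noteq> 0" using xy by simp
    ultimately show ?thesis unfolding cosang_def by (simp add: norm_minus_commute)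
  qed
  finally show ?thesis .
qed

theorem lemma8:
  fixes k :: nat and \<sigma> \<sigma>' :: "complex set" and t p x y :: complex
  assumes "k \<ge> 4"
    and "is_regular_polygon k \<sigma>"
    and "\<sigma>' = (\<lambda>z. z + t) ` \<sigma>"
    and "\<sigma>' \<noteq> \<sigma>"
    and "interior \<sigma> \<inter> interior \<sigma>' \<noteq> {}"
    and "p \<in> \<sigma> \<inter> \<sigma>'"
    and "x \<in> frontier \<sigma> \<inter> frontier \<sigma>'"
    and "y \<in> frontier \<sigma> \<inter> frontier \<sigma>'"
    and "connected_component_set (frontier \<sigma> \<inter> frontier \<sigma>') x \<noteq>
         connected_component_set (frontier \<sigma> \<inter> frontier \<sigma>') y"
    and "p \<noteq> x" and "p \<noteq> y"
  shows "angle_at x p y \<ge> pi / 4"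
proof -
  note k = assms(1)
  obtain c r th where r: "r > 0" and sig: "\<sigma> = regular_polygon k c r th"
    using assms(2) unfolding is_regular_polygon_def by blast
  have tr: "(\<lambda>z. z + t) = (+) t" by (rule ext) (simp add: add.commute)
  have sig': "\<sigma>' = (+) t ` \<sigma>" by (simp only: assms(3) tr)
  have cS: "convex \<sigma>" "closed \<sigma>" unfolding sig by (rule poly_convex, rule poly_closed)
  have cS': "convex \<sigma>'" "closed \<sigma>'" unfolding sig' using cS
    by (auto intro: convex_translation closed_translation)
  obtain ob where ob: "ob \<in> interior \<sigma>" "ob \<in> interior \<sigma>'" using assms(5) by blast
  have iS: "interior \<sigma> \<noteq> {}" and iS': "interior \<sigma>' \<noteq> {}" using ob by auto
  have t: "t \<noteq> 0"
  proof
    assume "t = 0"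
    hence "\<sigma>' = \<sigma>" unfolding sig' by simp
    thus False using assms(4) by simp
  qed
  have fr': "frontier \<sigma>' = (+) t ` frontier \<sigma>" unfolding sig' by (rule frontier_translation)
  have fs: "frontier \<sigma> \<subseteq> \<sigma>" using cS(2) frontier_subset_closed by blast
  have fs': "frontier \<sigma>' \<subseteq> \<sigma>'" using cS'(2) frontier_subset_closed by blast
  have inS': "z + t \<in> \<sigma>'" if "z \<in> \<sigma>" for z using that unfolding sig' by (simp add: add.commute)
  have inS'': "z - t \<in> \<sigma>" if "z \<in> \<sigma>'" for z using that unfolding sig' by auto
  have xf: "x \<in> frontier \<sigma>" "x \<in> frontier \<sigma>'" and yf: "y \<in> frontier \<sigma>" "y \<in> frontier \<sigma>'"
    using assms(7,8) by auto
  have xtf: "x - t \<in> frontier \<sigma>" using xf(2) unfolding fr' by auto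
  have ytf: "y - t \<in> frontier \<sigma>" using yf(2) unfolding fr' by auto
  have xS: "x \<in> \<sigma>" "x \<in> \<sigma>'" and yS: "y \<in> \<sigma>" "y \<in> \<sigma>'" using xf yf fs fs' by auto
  have xtS: "x - t \<in> \<sigma>" and ytS: "y - t \<in> \<sigma>" using xtf ytf fs by auto
  have xy: "x \<noteq> y" using assms(9) by auto
  have nonpar: "cross t (y - x) \<noteq> 0"
  proof
    assume "cross t (y - x) = 0"
    have "closed_segment x y \<subseteq> frontier \<sigma> \<inter> frontier ((+) t ` \<sigma>)"
      by (rule same_height[OF cS iS t xf(1) yf(1) xtf ytf \<open>cross t (y - x) = 0\<close>])
    hence seg: "closed_segment x y \<subseteq> frontier \<sigma> \<inter> frontier \<sigma>'" unfolding sig' .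
    have "closed_segment x y \<subseteq> connected_component_set (frontier \<sigma> \<inter> frontier \<sigma>') x"
      by (rule connected_component_maximal[OF _ connected_segment seg]) simp
    hence "y \<in> connected_component_set (frontier \<sigma> \<inter> frontier \<sigma>') x" by auto
    hence "connected_component_set (frontier \<sigma> \<inter> frontier \<sigma>') y =
           connected_component_set (frontier \<sigma> \<inter> frontier \<sigma>') x"
      by (rule connected_component_eq)
    thus False using assms(9) by simp
  qed
  define K where "K = cross (y - x) t"
  have K0: "K \<noteq> 0" using nonpar unfolding K_def cross_def by (simp add: algebra_simps)
  define \<eta> where "\<eta> = of_real K * (\<i> * (y - x))"
  have Geta: "inner \<eta> w = K * cross (y - x) w" for w unfolding \<eta>_def by (rule inner_eta)
  have "cross (y - x) (x - t - x) * K = - (K * K)" unfolding K_def cross_def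
    by (simp add: algebra_simps)
  moreover have KK: "K * K > 0" by (metis K0 linorder_neqE_linordered_idom mult_neg_neg mult_pos_pos)
  ultimately have Gxt: "cross (y - x) (x - t - x) * K < 0" by linarith
  have "cross (y - x) (x + t - x) = K" unfolding K_def by simp
  hence Gxt': "cross (y - x) (x + t - x) * K > 0" using KK by (simp only:)
  have pS: "p \<in> \<sigma>" "p \<in> \<sigma>'" using assms(6) by auto
  have main: "cosang (x - p) (y - p) \<le> sqrt 2 / 2"
  proof -
    consider "inner \<eta> (p - x) > 0" | "inner \<eta> (p - x) < 0" | "inner \<eta> (p - x) = 0" by linarith
    thus ?thesis
    proof cases
      case 1
      show ?thesis
      proof (rule core[OF k r t _ pS(1)[unfolded sig] 1])
        show "inner \<eta> (y - x) = 0" unfolding Geta by (simp add: cross_self)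
        fix z assume zS: "z \<in> regular_polygon k c r th" and z0: "inner \<eta> (z - x) = 0"
        show "z \<in> closed_segment x y"
        proof (rule line_in_segment'[OF cS iS xf(1) yf(1) xy zS[folded sig] _ pS(1) xtS])
          show "cross (y - x) (z - x) = 0" using z0 K0 unfolding Geta by simp
          show "cross (y - x) (p - x) * K > 0" using 1 unfolding Geta by (simp add: mult.commute)
          show "cross (y - x) (x - t - x) * K < 0" by (rule Gxt)
        qed
      next
        fix w n assume wS: "w \<in> regular_polygon k c r th" and w0: "inner \<eta> (w - x) > 0"
          and nw: "\<forall>z\<in>regular_polygon k c r th. inner n (z - w) \<le> 0"
        show "inner n t \<ge> 0"
        proof (rule normal_side[OF cS iS t xf(1) yf(1) xtS ytS nonpar wS[folded sig]])
          show "cross (y - x) (w - x) * cross (y - x) t > 0"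
            using w0 unfolding Geta K_def by (simp add: mult.commute)
          show "\<And>z. z \<in> \<sigma> \<Longrightarrow> inner n (z - w) \<le> 0" using nw sig by blast
        qed
      qed
    next
      case 2
      have qS: "p - t \<in> regular_polygon k c r th" using inS''[OF pS(2)] sig by simp
      have "cosang ((x - t) - (p - t)) ((y - t) - (p - t)) \<le> sqrt 2 / 2"
      proof (rule core[OF k r _ _ qS, of "- t" "- \<eta>"])
        show "- t \<noteq> 0" using t by simp
        show "inner (- \<eta>) ((y - t) - (x - t)) = 0" unfolding inner_minus_left Geta
          by (simp add: cross_self)
        show "inner (- \<eta>) ((p - t) - (x - t)) > 0" using 2 by simp
      next
        fix z assume zS: "z \<in> regular_polygon k c r th" and z0: "inner (- \<eta>) (z - (x - t)) = 0"
        have z'S: "z + t \<in> \<sigma>'" using inS'[of z] zS sig by simp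
        have xtt: "x + t \<in> \<sigma>'" using inS'[OF xS(1)] .
        have "z + t \<in> closed_segment x y"
        proof (rule line_in_segment'[OF cS' iS' xf(2) yf(2) xy z'S _ xtt pS(2)])
          have e: "z - (x - t) = z + t - x" by simp
          show "cross (y - x) (z + t - x) = 0" using z0 K0 unfolding inner_minus_left Geta e
            by simp
          show "cross (y - x) (x + t - x) * K > 0" by (rule Gxt')
          show "cross (y - x) (p - x) * K < 0" using 2 unfolding Geta by (simp add: mult.commute)
        qed
        then obtain u where u: "0 \<le> u" "u \<le> 1" "z + t = of_real (1 - u) * x + of_real u * y"
          unfolding closed_segment_def scaleR_c by blast
        have "z = of_real (1 - u) * (x - t) + of_real u * (y - t)"
        proof -
          have "z = (z + t) - t" by simp
          also have "\<dots> = of_real (1 - u) * (x - t) + of_real u * (y - t)"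
            unfolding u(3) by (simp add: algebra_simps)
          finally show ?thesis .
        qed
        thus "z \<in> closed_segment (x - t) (y - t)"
          unfolding closed_segment_def scaleR_c using u(1,2) by blast
      next
        fix w n assume wS: "w \<in> regular_polygon k c r th" and w0: "inner (- \<eta>) (w - (x - t)) > 0"
          and nw: "\<forall>z\<in>regular_polygon k c r th. inner n (z - w) \<le> 0"
        have wS': "w + t \<in> \<sigma>'" using inS'[of w] wS sig by simp
        have "inner n (- t) \<ge> 0"
        proof (rule normal_side[OF cS' iS' _ xf(2) yf(2) _ _ _ wS'])
          show "- t \<noteq> 0" using t by simp
          show "x - - t \<in> \<sigma>'" using inS'[OF xS(1)] by simp
          show "y - - t \<in> \<sigma>'" using inS'[OF yS(1)] by simp
          show "cross (- t) (y - x) \<noteq> 0" using nonpar unfolding cross_def by simp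
          have e: "w - (x - t) = w + t - x" by simp
          have "- (K * cross (y - x) (w + t - x)) > 0" using w0 unfolding inner_minus_left Geta e
            by simp
          thus "cross (y - x) (w + t - x) * cross (y - x) (- t) > 0"
            unfolding K_def cross_def by (simp add: algebra_simps)
          fix z assume "z \<in> \<sigma>'"
          hence "z - t \<in> \<sigma>" by (rule inS'')
          hence "inner n ((z - t) - w) \<le> 0" using nw sig by blast
          thus "inner n (z - (w + t)) \<le> 0" by (simp add: algebra_simps)
        qed
        thus "inner n (- t) \<ge> 0" .
      qed
      thus ?thesis by simp
    next
      case 3
      have p0: "cross (y - x) (p - x) = 0" using 3 K0 unfolding Geta by simp
      have eta0: "\<eta> \<noteq> 0" unfolding \<eta>_def using K0 xy by simp
      have "p \<in> closed_segment x y"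
      proof (cases "cross (y - x) (ob - x) * K \<ge> 0")
        case True
        obtain e where e: "e > 0" "ball ob e \<subseteq> \<sigma>" using ob(1) mem_interior by blast
        define u where "u = ob + of_real (e / 2 / norm \<eta>) * \<eta>"
        have "norm (of_real (e / 2 / norm \<eta>) * \<eta>) = e / 2"
          by (simp only: norm_mult norm_of_real) (use e(1) eta0 in simp)
        hence "dist ob u = e / 2" unfolding u_def dist_norm by simp
        hence uS: "u \<in> \<sigma>" using e by auto
        have "inner \<eta> (u - x) = inner \<eta> (ob - x) + e / 2 / norm \<eta> * inner \<eta> \<eta>"
        proof -
          have "u - x = (ob - x) + of_real (e / 2 / norm \<eta>) * \<eta>" unfolding u_def by simp
          thus ?thesis by (simp only: inner_add_right inner_scale_right_c)
        qed
        moreover have "e / 2 / norm \<eta> * inner \<eta> \<eta> > 0" using e(1) eta0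
          by (simp add: power2_norm_eq_inner[symmetric])
        moreover have "inner \<eta> (ob - x) \<ge> 0" using True unfolding Geta by (simp add: mult.commute)
        ultimately have "inner \<eta> (u - x) > 0" by linarith
        hence "cross (y - x) (u - x) * K > 0" unfolding Geta by (simp add: mult.commute)
        thus ?thesis using line_in_segment'[OF cS iS xf(1) yf(1) xy pS(1) p0 uS xtS _ Gxt] by blast
      next
        case False
        have oS': "ob \<in> \<sigma>'" using ob(2) interior_subset by blast
        have xtt: "x + t \<in> \<sigma>'" using inS'[OF xS(1)] .
        show ?thesis
          by (rule line_in_segment'[OF cS' iS' xf(2) yf(2) xy pS(2) p0 xtt oS' Gxt'])
             (use False in linarith)
      qed
      hence "cosang (x - p) (y - p) = -1" using cosang_opposite assms(10,11) by blast
      moreover have "sqrt 2 \<ge> 0" by simp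
      ultimately show ?thesis by linarith
    qed
  qed
  have ae: "angle_at x p y = arccos (cosang (x - p) (y - p))"
    unfolding angle_at_def cosang_def ..
  have s2: "sqrt (2::real) \<le> 2" using real_sqrt_le_mono[of 2 4] by simp
  have "arccos (sqrt 2 / 2) \<le> arccos (cosang (x - p) (y - p))"
    by (rule arccos_le_arccos) (use main cosang_ge_m1 s2 in auto)
  moreover have "arccos (sqrt 2 / 2) = pi / 4"
    using arccos_cos[of "pi/4"] cos_45 by simp
  ultimately show ?thesis unfolding ae by simp
qed

end
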